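(* Let $q$ be a prime power, $0\le k\le n$, and let $i$ be an integer with $0\le i<\left[\begin{smallmatrix} n\\ k\end{smallmatrix}\right]_q$. Then Encoding Algorithm A, run on input $i$, outputs $\mathrm{EXT}(X)$ for a subspace $X\in\mathcal{G}_q(n,k)$ satisfying $\mathrm{I}_{\mathrm{EXT}}(X)=i$.
   Context: $\mathcal{G}_q(n,k)$ is the set of $k$-dimensional subspaces of $\mathbb{F}_q^n$, with field elements identified with $\mathbb{Z}_q=\{0,\dots,q-1\}$ (with $0\mapsto0,1\mapsto1$). $\left[\begin{smallmatrix} n\\ k\end{smallmatrix}\right]_q=\prod_{i=0}^{k-1}\frac{q^{n-i}-1}{q^{k-i}-1}$, $\left[\begin{smallmatrix} n\\ 0\end{smallmatrix}\right]_q=1$, and it is $0$ if $k>n$ or $k<0$. For $X\in\mathcal{G}_q(n,k)$: $\mathrm{RE}(X)$ is the unique $k\times n$ reduced row echelon matrix whose rows span $X$, columns labelled $X_n,\dots,X_1$ left to right; $v(X)=(v_n,\dots,v_1)$ is binary with $v_i=1$ iff column $X_i$ contains a row's leading one; $\mathrm{EXT}(X)$ is the $(k+1)\times n$ matrix with top row $v(X)$ above $\mathrm{RE}(X)$, its $i$-th column being $\binom{v_i}{X_i}$. For a $q$-ary vector $y=(y_1,\dots,y_r)$, $\{y\}=\sum_t y_tq^{r-t}$; for an integer $a\ge0$, $\{a\}_q$ denotes its base-$q$ representation as a column vector of length $k$ (top entry most significant). Order: $X<Y$ if at the least index $i$ where the $i$-th columns of $\mathrm{EXT}(X),\mathrm{EXT}(Y)$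 differ, $\{\binom{v(X)_i}{X_i}\}<\{\binom{v(Y)_i}{Y_i}\}$; $\mathrm{I}_{\mathrm{EXT}}(X)$ is the number of $Y\in\mathcal{G}_q(n,k)$ with $Y<X$. Encoding Algorithm A: set $i_0=i$, $w_0=0$. For $j=1,\dots,n$: (1) if $w_{j-1}=k$, set $v_j=0$, $w_j=w_{j-1}$, $X_j=\{0\}_q$, $i_j=i_{j-1}$; (2) otherwise, if $i_{j-1}\ge q^{k-w_{j-1}}\left[\begin{smallmatrix} n-j\\ k-w_{j-1}\end{smallmatrix}\right]_q$, set $v_j=1$, $w_j=w_{j-1}+1$, $X_j=\{q^{w_{j-1}}\}_q$, $i_j=i_{j-1}-q^{k-w_{j-1}}\left[\begin{smallmatrix} n-j\\ k-w_{j-1}\end{smallmatrix}\right]_q$; (3) otherwise let $val=\lfloor i_{j-1}/\left[\begin{smallmatrix} n-j\\ k-w_{j-1}\end{smallmatrix}\right]_q\rfloor$ and set $v_j=0$, $w_j=w_{j-1}$, $X_j=\{val\cdot q^{w_{j-1}}\}_q$, $i_j=i_{j-1}-val\cdot\left[\begin{smallmatrix} n-j\\ k-w_{j-1}\end{smallmatrix}\right]_q$. Output the matrix $\begin{pmatrix} v_n&\cdots&v_1\\ X_n&\cdots&X_1\end{pmatrix}$. *)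

theory Defs
  imports Complex_Main "HOL-Computational_Algebra.Primes"
begin

text \<open>Vectors of F^n are functions nat => 'a whose support lies in {1..n};
coordinate c is the column labelled X_c (columns X_n, ..., X_1 from left to right).
A k x n matrix is a function M :: nat => nat => 'a, rows indexed 1..k (top to bottom),
columns indexed by labels 1..n, zero outside this range.\<close>

definition prime_power :: "nat \<Rightarrow> bool" where
  "prime_power q \<longleftrightarrow> (\<exists>p m. prime p \<and> m \<ge> 1 \<and> q = p ^ m)"

definition gauss_binom :: "nat \<Rightarrow> nat \<Rightarrow> nat \<Rightarrow> real" where
  "gauss_binom q n k =
     (if k > n then 0
      else (\<Prod>i<k. (real q ^ (n - i) - 1) / (real q ^ (k - i) - 1)))"

definition is_vec :: "nat \<Rightarrow> (nat \<Rightarrow> 'a::zero) \<Rightarrow> bool" where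
  "is_vec n v \<longleftrightarrow> (\<forall>c. v c \<noteq> 0 \<longrightarrow> c \<in> {1..n})"

definition is_mat :: "nat \<Rightarrow> nat \<Rightarrow> (nat \<Rightarrow> nat \<Rightarrow> 'a::zero) \<Rightarrow> bool" where
  "is_mat k n M \<longleftrightarrow> (\<forall>r c. M r c \<noteq> 0 \<longrightarrow> r \<in> {1..k} \<and> c \<in> {1..n})"

definition rowspan :: "nat \<Rightarrow> (nat \<Rightarrow> nat \<Rightarrow> 'a::field) \<Rightarrow> (nat \<Rightarrow> 'a) set" where
  "rowspan k M = {(\<lambda>c. \<Sum>r\<in>{1..k}. a r * M r c) | a. True}"

definition rows_indep :: "nat \<Rightarrow> (nat \<Rightarrow> nat \<Rightarrow> 'a::field) \<Rightarrow> bool" where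
  "rows_indep k M \<longleftrightarrow>
     (\<forall>a. (\<forall>c. (\<Sum>r\<in>{1..k}. a r * M r c) = 0) \<longrightarrow> (\<forall>r\<in>{1..k}. a r = 0))"

definition grassmannian :: "nat \<Rightarrow> nat \<Rightarrow> (nat \<Rightarrow> 'a::field) set set" where
  "grassmannian n k = {X. \<exists>M. is_mat k n M \<and> rows_indep k M \<and> X = rowspan k M}"

text \<open>Position (column label) of the leading (leftmost nonzero, i.e. largest label) entry of row r.\<close>
definition lead_pos :: "(nat \<Rightarrow> nat \<Rightarrow> 'a::zero) \<Rightarrow> nat \<Rightarrow> nat" where
  "lead_pos M r = (GREATEST c. M r c \<noteq> 0)"

definition is_rref :: "nat \<Rightarrow> nat \<Rightarrow> (nat \<Rightarrow> nat \<Rightarrow> 'a::field) \<Rightarrow> bool" where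
  "is_rref k n M \<longleftrightarrow> is_mat k n M \<and>
     (\<forall>r\<in>{1..k}. (\<exists>c. M r c \<noteq> 0) \<and> M r (lead_pos M r) = 1) \<and>
     (\<forall>r\<in>{1..k}. \<forall>r'\<in>{1..k}. r < r' \<longrightarrow> lead_pos M r' < lead_pos M r) \<and>
     (\<forall>r\<in>{1..k}. \<forall>r'\<in>{1..k}. r' \<noteq> r \<longrightarrow> M r' (lead_pos M r) = 0)"

definition RE :: "nat \<Rightarrow> nat \<Rightarrow> (nat \<Rightarrow> 'a::field) set \<Rightarrow> nat \<Rightarrow> nat \<Rightarrow> 'a" where
  "RE k n X = (THE M. is_rref k n M \<and> rowspan k M = X)"

definition vX :: "nat \<Rightarrow> nat \<Rightarrow> (nat \<Rightarrow> 'a::field) set \<Rightarrow> nat \<Rightarrow> nat" where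
  "vX k n X c = (if \<exists>r\<in>{1..k}. lead_pos (RE k n X) r = c then 1 else 0)"

definition EXT :: "('a::field \<Rightarrow> nat) \<Rightarrow> nat \<Rightarrow> nat \<Rightarrow> (nat \<Rightarrow> 'a) set \<Rightarrow> nat \<Rightarrow> nat \<Rightarrow> nat" where
  "EXT enc k n X r c =
     (if c \<in> {1..n} then
        (if r = 0 then vX k n X c else if r \<le> k then enc (RE k n X r c) else 0)
      else 0)"

definition col_val :: "nat \<Rightarrow> nat \<Rightarrow> (nat \<Rightarrow> nat \<Rightarrow> nat) \<Rightarrow> nat \<Rightarrow> nat" where
  "col_val q k E c = (\<Sum>t\<in>{0..k}. E t c * q ^ (k - t))"

definition ext_less ::
  "nat \<Rightarrow> ('a::field \<Rightarrow> nat) \<Rightarrow> nat \<Rightarrow> nat \<Rightarrow> (nat \<Rightarrow> 'a) set \<Rightarrow> (nat \<Rightarrow> 'a) set \<Rightarrow> bool" where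
  "ext_less q enc n k X Y \<longleftrightarrow>
     (\<exists>i\<in>{1..n}.
        (\<forall>j\<in>{1..<i}. \<forall>t\<in>{0..k}. EXT enc k n X t j = EXT enc k n Y t j) \<and>
        (\<exists>t\<in>{0..k}. EXT enc k n X t i \<noteq> EXT enc k n Y t i) \<and>
        col_val q k (EXT enc k n X) i < col_val q k (EXT enc k n Y) i)"

definition I_EXT :: "nat \<Rightarrow> ('a::field \<Rightarrow> nat) \<Rightarrow> nat \<Rightarrow> nat \<Rightarrow> (nat \<Rightarrow> 'a) set \<Rightarrow> nat" where
  "I_EXT q enc n k X = card {Y \<in> grassmannian n k. ext_less q enc n k Y X}"

text \<open>Encoding Algorithm A. alg_state q n k i j = (i_j, w_j).\<close>
primrec alg_state :: "nat \<Rightarrow> nat \<Rightarrow> nat \<Rightarrow> int \<Rightarrow> nat \<Rightarrow> int \<times> nat" where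
  "alg_state q n k i 0 = (i, 0)"
| "alg_state q n k i (Suc j) =
     (let (ii, w) = alg_state q n k i j;
          g = gauss_binom q (n - Suc j) (k - w)
      in if w = k then (ii, w)
         else if real_of_int ii \<ge> real q ^ (k - w) * g
           then (ii - \<lfloor>real q ^ (k - w) * g\<rfloor>, w + 1)
         else (let val = \<lfloor>real_of_int ii / g\<rfloor> in (ii - \<lfloor>real_of_int val * g\<rfloor>, w)))"

text \<open>Step j (1 \<le> j \<le> n) of the algorithm: the pair (v_j, a_j) where X_j = {a_j}_q.\<close>
definition alg_col :: "nat \<Rightarrow> nat \<Rightarrow> nat \<Rightarrow> int \<Rightarrow> nat \<Rightarrow> nat \<times> nat" where
  "alg_col q n k i j =
     (let (ii, w) = alg_state q n k i (j - 1);
          g = gauss_binom q (n - j) (k - w)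
      in if w = k then (0, 0)
         else if real_of_int ii \<ge> real q ^ (k - w) * g then (1, q ^ w)
         else (0, nat \<lfloor>real_of_int ii / g\<rfloor> * q ^ w))"

text \<open>Output matrix: row 0 is (v_n ... v_1), rows 1..k hold the base-q columns {a_j}_q
of length k (top entry most significant); columns indexed by labels 1..n.\<close>
definition alg_out :: "nat \<Rightarrow> nat \<Rightarrow> nat \<Rightarrow> int \<Rightarrow> nat \<Rightarrow> nat \<Rightarrow> nat" where
  "alg_out q n k i r j =
     (if j \<in> {1..n} then
        (if r = 0 then fst (alg_col q n k i j)
         else if r \<le> k then (snd (alg_col q n k i j) div q ^ (k - r)) mod q
         else 0)
      else 0)"

end

theory Submission
  imports Defs
begin


fun gb :: "nat \<Rightarrow> nat \<Rightarrow> nat \<Rightarrow> nat" where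
  "gb q n 0 = 1"
| "gb q 0 (Suc k) = 0"
| "gb q (Suc n) (Suc k) = gb q n k + q ^ Suc k * gb q n (Suc k)"

lemma gb_gt: "k > n \<Longrightarrow> gb q n k = 0"
  by (induction q n k rule: gb.induct) auto

definition GA :: "nat \<Rightarrow> nat \<Rightarrow> nat \<Rightarrow> real" where
  "GA q n k = (\<Prod>i<k. real q ^ (n - i) - 1)"
definition GB :: "nat \<Rightarrow> nat \<Rightarrow> real" where
  "GB q k = (\<Prod>i<k. real q ^ (k - i) - 1)"

lemma gauss_AB: "k \<le> n \<Longrightarrow> gauss_binom q n k = GA q n k / GB q k"
  unfolding gauss_binom_def GA_def GB_def by (simp add: prod_dividef)

lemma GB_Suc: "GB q (Suc k) = (real q ^ Suc k - 1) * GB q k"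
  unfolding GB_def by (subst prod.lessThan_Suc_shift) simp

lemma GA_Suc: "GA q n (Suc k) = GA q n k * (real q ^ (n - k) - 1)"
  unfolding GA_def by simp

lemma GA_Suc_Suc: "GA q (Suc n) (Suc k) = (real q ^ Suc n - 1) * GA q n k"
  unfolding GA_def by (subst prod.lessThan_Suc_shift) simp

lemma pow_gt1: "q \<ge> 2 \<Longrightarrow> m > 0 \<Longrightarrow> real q ^ m - 1 > 0"
proof -
  assume "q \<ge> 2" "m > 0"
  then have "1 < real q ^ m" by (intro one_less_power) auto
  then show ?thesis by simp
qed

lemma GB_pos: "q \<ge> 2 \<Longrightarrow> GB q k > 0"
  unfolding GB_def by (intro prod_pos) (auto intro: pow_gt1)

lemma gauss_0: "gauss_binom q n 0 = 1"
  unfolding gauss_binom_def by simp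

lemma gauss_0_Suc: "gauss_binom q 0 (Suc k) = 0"
  unfolding gauss_binom_def by simp

lemma gauss_same: "q \<ge> 2 \<Longrightarrow> gauss_binom q n n = 1"
  using GB_pos[of q n] by (simp add: gauss_AB GA_def GB_def[symmetric])

lemma alg_id: "(b::real) \<noteq> 0 \<Longrightarrow> Q - 1 \<noteq> 0 \<Longrightarrow>
  (Q*P - 1)*a/((Q-1)*b) = a/b + Q*(a*(P-1)/((Q-1)*b))"
  by (simp add: field_simps)

lemma gauss_pascal:
  assumes q: "q \<ge> 2"
  shows "gauss_binom q (Suc n) (Suc k) = gauss_binom q n k + real q ^ Suc k * gauss_binom q n (Suc k)"
proof (cases "k < n")
  case True
  have B: "GB q k > 0" using GB_pos[OF q] .
  have C: "real q ^ Suc k - 1 > 0" using pow_gt1[OF q, of "Suc k"] by simp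
  have e: "real q ^ Suc k * real q ^ (n - k) = real q ^ Suc n"
    using True by (simp add: power_add[symmetric])
  have "gauss_binom q (Suc n) (Suc k) = (real q ^ Suc n - 1) * GA q n k / ((real q ^ Suc k - 1) * GB q k)"
    using True by (simp add: gauss_AB GA_Suc_Suc GB_Suc)
  also have "\<dots> = GA q n k / GB q k + real q ^ Suc k * (GA q n k * (real q ^ (n - k) - 1) / ((real q ^ Suc k - 1) * GB q k))"
    unfolding e[symmetric] using B C by (intro alg_id) auto
  also have "\<dots> = gauss_binom q n k + real q ^ Suc k * gauss_binom q n (Suc k)"
    using True by (simp add: gauss_AB GA_Suc GB_Suc)
  finally show ?thesis .
next
  case False
  show ?thesis
  proof (cases "k = n")
    case True
    then show ?thesis using gauss_same[OF q] by (simp add: gauss_binom_def)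
  next
    case False
    then show ?thesis using \<open>\<not> k < n\<close> by (simp add: gauss_binom_def)
  qed
qed

lemma gauss_gb: "q \<ge> 2 \<Longrightarrow> gauss_binom q n k = real (gb q n k)"
proof (induction q n k rule: gb.induct)
  case (1 q n) then show ?case by (simp add: gauss_0)
next
  case (2 q k) then show ?case by (simp add: gauss_0_Suc)
next
  case (3 q n k) then show ?case by (simp add: gauss_pascal)
qed



lemma alg_w_le: "snd (alg_state q n k i j) \<le> k"
  by (induction j) (auto simp: Let_def split: prod.splits)

lemma alg_shift:
  assumes "alg_state q (Suc m) k i 1 = (i1, w1)"
  shows "alg_state q (Suc m) k i (Suc j) =
     (fst (alg_state q m (k - w1) i1 j), snd (alg_state q m (k - w1) i1 j) + w1)"
proof (induction j)
  case 0 then show ?case using assms by simp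
next
  case (Suc j)
  have w1: "w1 \<le> k" using alg_w_le[of q "Suc m" k i 1] assms by simp
  obtain ii w where st: "alg_state q m (k - w1) i1 j = (ii, w)" by fastforce
  have wle: "w \<le> k - w1" using alg_w_le[of q m "k - w1" i1 j] st by simp
  have e1: "Suc m - Suc (Suc j) = m - Suc j" by simp
  have e2: "k - (w + w1) = k - w1 - w" by simp
  have e3: "(w + w1 = k) = (w = k - w1)" using wle w1 by auto
  show ?case
    unfolding alg_state.simps(2)[of q "Suc m" k i "Suc j"] alg_state.simps(2)[of q m "k - w1" i1 j]
    using Suc st e1 e2 e3 by (simp add: Let_def)
qed

lemma alg_col_shift:
  assumes "alg_state q (Suc m) k i 1 = (i1, w1)" "j \<ge> 1"
  shows "alg_col q (Suc m) k i (Suc j) =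
     (fst (alg_col q m (k - w1) i1 j), snd (alg_col q m (k - w1) i1 j) * q ^ w1)"
proof -
  obtain j' where j': "j = Suc j'" using assms(2) by (cases j) auto
  have w1: "w1 \<le> k" using alg_w_le[of q "Suc m" k i 1] assms by simp
  obtain ii w where st: "alg_state q m (k - w1) i1 j' = (ii, w)" by fastforce
  have wle: "w \<le> k - w1" using alg_w_le[of q m "k - w1" i1 j'] st by simp
  have S: "alg_state q (Suc m) k i j = (ii, w + w1)"
    using alg_shift[OF assms(1), of j'] st j' by simp
  have e2: "k - (w + w1) = k - w1 - w" by simp
  have e3: "(w + w1 = k) = (w = k - w1)" using wle w1 by auto
  show ?thesis
    unfolding alg_col_def using S st j' e2 e3 by (simp add: Let_def power_add)
qed



primrec hv :: "nat \<Rightarrow> (nat \<Rightarrow> nat) \<Rightarrow> nat \<Rightarrow> nat" where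
  "hv q f 0 = 0"
| "hv q f (Suc k) = q * hv q f k + f (Suc k)"

lemma hv_sum: "hv q f k = (\<Sum>r\<in>{1..k}. f r * q ^ (k - r))"
proof (induction k)
  case 0 then show ?case by simp
next
  case (Suc k)
  have "(\<Sum>r\<in>{1..Suc k}. f r * q ^ (Suc k - r)) = (\<Sum>r\<in>{1..k}. f r * q ^ (Suc k - r)) + f (Suc k)"
    by simp
  also have "(\<Sum>r\<in>{1..k}. f r * q ^ (Suc k - r)) = q * (\<Sum>r\<in>{1..k}. f r * q ^ (k - r))"
    by (simp add: sum_distrib_left Suc_diff_le mult.left_commute)
  finally show ?case using Suc by simp
qed

lemma hv_cong: "(\<And>s. s \<in> {1..k} \<Longrightarrow> f s = g s) \<Longrightarrow> hv q f k = hv q g k"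
  by (induction k) auto

lemma hv_bound: "q > 0 \<Longrightarrow> (\<And>s. s \<in> {1..k} \<Longrightarrow> f s < q) \<Longrightarrow> hv q f k < q ^ k"
proof (induction k)
  case 0 then show ?case by simp
next
  case (Suc k)
  then have h: "hv q f k + 1 \<le> q ^ k" by auto
  have "f (Suc k) < q" using Suc by auto
  then have "q * hv q f k + f (Suc k) < q * hv q f k + q" by simp
  also have "\<dots> = q * (hv q f k + 1)" by simp
  also have "\<dots> \<le> q * q ^ k" by (rule mult_le_mono2[OF h])
  finally show ?case by simp
qed

lemma hv_digit:
  assumes "q > 0" "\<And>s. s \<in> {1..k} \<Longrightarrow> f s < q" "s \<in> {1..k}"
  shows "hv q f k div q ^ (k - s) mod q = f s"
  using assms(2,3)
proof (induction k)
  case 0 then show ?case by simp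
next
  case (Suc k)
  have fk: "f (Suc k) < q" using Suc by auto
  show ?case
  proof (cases "s = Suc k")
    case True then show ?thesis using fk by simp
  next
    case False
    then have s: "s \<in> {1..k}" using Suc by auto
    have e: "Suc k - s = Suc (k - s)" using s by auto
    have "(q * hv q f k + f (Suc k)) div q ^ (Suc k - s) = (q * hv q f k + f (Suc k)) div q div q ^ (k - s)"
      unfolding e by (simp add: div_mult2_eq)
    also have "(q * hv q f k + f (Suc k)) div q = hv q f k" using fk assms(1) by simp
    finally show ?thesis using Suc s by simp
  qed
qed

lemma hv_inj:
  assumes "q > 0" "\<And>s. s \<in> {1..k} \<Longrightarrow> f s < q" "\<And>s. s \<in> {1..k} \<Longrightarrow> g s < q"
    "hv q f k = hv q g k" "s \<in> {1..k}"
  shows "f s = g s"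
  using hv_digit[of q k f s] hv_digit[of q k g s] assms by simp

lemma col_val_hv: "col_val q k E c = E 0 c * q ^ k + hv q (\<lambda>t. E t c) k"
proof -
  have "col_val q k E c = E 0 c * q ^ k + (\<Sum>t\<in>{1..k}. E t c * q ^ (k - t))"
    unfolding col_val_def by (simp add: sum.atLeast_Suc_atMost)
  then show ?thesis by (simp add: hv_sum)
qed

lemma two_digit_inj:
  assumes "q > 0" "(a::nat) < q ^ k" "b < q ^ k" "x * q ^ k + a = y * q ^ k + b"
  shows "x = y \<and> a = b"
proof -
  have 1: "(x * q ^ k + a) div q ^ k = x" using assms(1,2) by simp
  have 2: "(y * q ^ k + b) div q ^ k = y" using assms(1,3) by simp
  have "x = y" using 1 2 assms(4) by metis
  then show ?thesis using assms(4) by simp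
qed

definition supp_on :: "nat set \<Rightarrow> (nat \<Rightarrow> 'a::zero) set" where
  "supp_on S = {f. \<forall>x. f x \<noteq> 0 \<longrightarrow> x \<in> S}"

lemma supp_on_card:
  assumes "finite S"
  shows "finite (supp_on S :: (nat \<Rightarrow> 'a::{zero,finite}) set) \<and>
         card (supp_on S :: (nat \<Rightarrow> 'a) set) = card (UNIV::'a set) ^ card S"
  using assms
proof (induction S rule: finite_induct)
  case empty
  have "supp_on {} = {(\<lambda>_. 0) :: nat \<Rightarrow> 'a}" unfolding supp_on_def by auto
  then show ?case by simp
next
  case (insert x S)
  let ?A = "supp_on (insert x S) :: (nat \<Rightarrow> 'a) set"
  let ?B = "supp_on S :: (nat \<Rightarrow> 'a) set"
  have bij: "bij_betw (\<lambda>f. (f x, f(x := 0))) ?A (UNIV \<times> ?B)"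
  proof (rule bij_betw_byWitness[where f' = "\<lambda>(a, g). g(x := a)"])
    show "\<forall>a\<in>?A. (\<lambda>(a, g). g(x := a)) (a x, a(x := 0)) = a" by auto
    show "\<forall>a'\<in>UNIV \<times> ?B. (\<lambda>f. (f x, f(x := 0))) ((\<lambda>(a, g). g(x := a)) a') = a'"
      using insert(2) unfolding supp_on_def by (force simp: fun_eq_iff)
    show "(\<lambda>f. (f x, f(x := 0))) ` ?A \<subseteq> UNIV \<times> ?B" unfolding supp_on_def by (auto split: if_splits)
    show "(\<lambda>(a, g). g(x := a)) ` (UNIV \<times> ?B) \<subseteq> ?A" unfolding supp_on_def by auto
  qed
  have "finite ((UNIV::'a set) \<times> ?B)" using insert by simp
  then have f: "finite ?A" using bij bij_betw_finite by blast
  have "card ?A = card ((UNIV::'a set) \<times> ?B)" using bij_betw_same_card[OF bij] .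
  also have "\<dots> = card (UNIV::'a set) * card (UNIV::'a set) ^ card S" using insert by (simp add: card_cartesian_product)
  finally show ?case using f insert by simp
qed



definition vlead :: "(nat \<Rightarrow> 'a::zero) \<Rightarrow> nat" where
  "vlead x = (GREATEST c. x c \<noteq> 0)"

lemma lead_pos_vlead: "lead_pos M r = vlead (M r)"
  unfolding lead_pos_def vlead_def ..

lemma vlead_eq:
  assumes "x c \<noteq> 0" "\<And>c'. c' > c \<Longrightarrow> x c' = 0" shows "vlead x = c"
  unfolding vlead_def
proof (rule Greatest_equality)
  show "x c \<noteq> 0" by fact
  fix y assume "x y \<noteq> 0" then show "y \<le> c" using assms(2) not_le by blast
qed

lemma vlead_props:
  assumes "\<And>c. x c \<noteq> 0 \<Longrightarrow> c \<le> n" "x c \<noteq> 0"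
  shows "x (vlead x) \<noteq> 0" "c \<le> vlead x" "\<And>c'. c' > vlead x \<Longrightarrow> x c' = 0"
proof -
  show a: "x (vlead x) \<noteq> 0" unfolding vlead_def by (rule GreatestI_nat[of "\<lambda>c. x c \<noteq> 0" c n]) (use assms in auto)
  show "c \<le> vlead x" unfolding vlead_def by (rule Greatest_le_nat[of "\<lambda>c. x c \<noteq> 0" c n]) (use assms in auto)
  fix c' assume "c' > vlead x"
  show "x c' = 0"
  proof (rule ccontr)
    assume "x c' \<noteq> 0"
    then have "c' \<le> vlead x" unfolding vlead_def by (rule Greatest_le_nat[of "\<lambda>c. x c \<noteq> 0" c' n]) (use assms in auto)
    then show False using \<open>c' > vlead x\<close> by simp
  qed
qed

lemma is_vec_supp:
  assumes "\<forall>c. x c \<noteq> 0 \<longrightarrow> c \<in> {1..n}" "x c \<noteq> 0" shows "vlead x \<in> {1..n}"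
proof -
  have "\<And>c. x c \<noteq> 0 \<Longrightarrow> c \<le> n" using assms(1) by auto
  then have "x (vlead x) \<noteq> 0" using vlead_props(1) assms(2) by blast
  then show ?thesis using assms(1) by blast
qed

context
  fixes k n :: nat and M :: "nat \<Rightarrow> nat \<Rightarrow> 'a::field"
  assumes R: "is_rref k n M"
begin

lemma R_mat: "is_mat k n M" using R unfolding is_rref_def by simp

lemma R_nz: "r \<in> {1..k} \<Longrightarrow> M r (lead_pos M r) = 1"
  using R unfolding is_rref_def by simp

lemma R_dec: "r \<in> {1..k} \<Longrightarrow> r' \<in> {1..k} \<Longrightarrow> r < r' \<Longrightarrow> lead_pos M r' < lead_pos M r"
  using R unfolding is_rref_def by simp

lemma R_dec_le: "r \<in> {1..k} \<Longrightarrow> r' \<in> {1..k} \<Longrightarrow> r \<le> r' \<Longrightarrow> lead_pos M r' \<le> lead_pos M r"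
  using R_dec[of r r'] by (cases "r = r'") auto

lemma R_piv: "r \<in> {1..k} \<Longrightarrow> r' \<in> {1..k} \<Longrightarrow> M r' (lead_pos M r) = (if r' = r then 1 else 0)"
  using R unfolding is_rref_def by auto

lemma R_after: "r \<in> {1..k} \<Longrightarrow> c > lead_pos M r \<Longrightarrow> M r c = 0"
proof -
  assume r: "r \<in> {1..k}" "c > lead_pos M r"
  have "\<And>c. M r c \<noteq> 0 \<Longrightarrow> c \<le> n" using R_mat unfolding is_mat_def by auto
  moreover have "M r (lead_pos M r) \<noteq> 0" using R_nz r by simp
  ultimately show ?thesis using vlead_props(3)[of "M r" n "lead_pos M r" c] r unfolding lead_pos_vlead by simp
qed

lemma R_range: "r \<in> {1..k} \<Longrightarrow> lead_pos M r \<in> {1..n}"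
proof -
  assume r: "r \<in> {1..k}"
  have "M r (lead_pos M r) \<noteq> 0" using R_nz[OF r] by simp
  then show ?thesis using R_mat unfolding is_mat_def by blast
qed

lemma R_comb: "r0 \<in> {1..k} \<Longrightarrow> (\<Sum>r\<in>{1..k}. a r * M r (lead_pos M r0)) = a r0"
proof -
  assume r0: "r0 \<in> {1..k}"
  have "(\<Sum>r\<in>{1..k}. a r * M r (lead_pos M r0)) = (\<Sum>r\<in>{1..k}. if r = r0 then a r else 0)"
  proof (rule sum.cong)
    fix r assume r: "r \<in> {1..k}"
    show "a r * M r (lead_pos M r0) = (if r = r0 then a r else 0)" using R_piv[OF r0 r] by simp
  qed simp
  also have "\<dots> = a r0" using r0 by simp
  finally show ?thesis .
qed

lemma R_indep: "rows_indep k M"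
  unfolding rows_indep_def
proof (intro allI impI ballI)
  fix a r assume h: "\<forall>c. (\<Sum>r\<in>{1..k}. a r * M r c) = 0" and r: "r \<in> {1..k}"
  show "a r = 0" using h[rule_format, of "lead_pos M r"] R_comb[OF r, of a] by simp
qed

end

definition lin :: "(nat \<Rightarrow> 'a::field) set \<Rightarrow> bool" where
  "lin X \<longleftrightarrow> (\<lambda>_. 0) \<in> X \<and> (\<forall>x\<in>X. \<forall>y\<in>X. (\<lambda>c. x c + y c) \<in> X) \<and> (\<forall>x\<in>X. \<forall>t. (\<lambda>c. t * x c) \<in> X)"

lemma lin_rowspan: "lin (rowspan k M)"
  unfolding lin_def rowspan_def
proof (intro conjI ballI allI)
  show "(\<lambda>_. 0) \<in> {\<lambda>c. \<Sum>r\<in>{1..k}. a r * M r c |a. True}"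
    by (rule CollectI, rule exI[of _ "\<lambda>_. 0"]) simp
next
  fix x y assume "x \<in> {\<lambda>c. \<Sum>r\<in>{1..k}. a r * M r c |a. True}" "y \<in> {\<lambda>c. \<Sum>r\<in>{1..k}. a r * M r c |a. True}"
  then obtain a b where "x = (\<lambda>c. \<Sum>r\<in>{1..k}. a r * M r c)" "y = (\<lambda>c. \<Sum>r\<in>{1..k}. b r * M r c)" by blast
  then show "(\<lambda>c. x c + y c) \<in> {\<lambda>c. \<Sum>r\<in>{1..k}. a r * M r c |a. True}"
    by (intro CollectI exI[of _ "\<lambda>r. a r + b r"]) (simp add: sum.distrib distrib_right)
next
  fix x t assume "x \<in> {\<lambda>c. \<Sum>r\<in>{1..k}. a r * M r c |a. True}"
  then obtain a where "x = (\<lambda>c. \<Sum>r\<in>{1..k}. a r * M r c)" by blast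
  then show "(\<lambda>c. t * x c) \<in> {\<lambda>c. \<Sum>r\<in>{1..k}. a r * M r c |a. True}"
    by (intro CollectI exI[of _ "\<lambda>r. t * a r"]) (simp add: sum_distrib_left mult.assoc)
qed

lemma lin_sum:
  assumes "lin X" "finite S" "\<And>s. s \<in> S \<Longrightarrow> f s \<in> X"
  shows "(\<lambda>c. \<Sum>s\<in>S. b s * f s c) \<in> X"
  using assms(2,3)
proof (induction S rule: finite_induct)
  case empty then show ?case using assms(1) unfolding lin_def by simp
next
  case (insert x S)
  have 1: "(\<lambda>c. b x * f x c) \<in> X" using assms(1) insert unfolding lin_def by simp
  have 2: "(\<lambda>c. \<Sum>s\<in>S. b s * f s c) \<in> X" using insert by simp
  show ?case using insert(1,2) assms(1) 1 2 unfolding lin_def by simp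
qed

lemma lin_diff:
  assumes "lin X" "x \<in> X" "y \<in> X"
  shows "(\<lambda>c. x c - y c) \<in> X"
proof -
  have sm: "\<forall>x\<in>X. \<forall>t. (\<lambda>c. t * x c) \<in> X" and ad: "\<forall>x\<in>X. \<forall>y\<in>X. (\<lambda>c. x c + y c) \<in> X"
    using assms(1) unfolding lin_def by auto
  have "(\<lambda>c. (-1) * y c) \<in> X" using sm assms(3) by blast
  then have "(\<lambda>c. x c + (\<lambda>c. (-1) * y c) c) \<in> X" by (rule ad[rule_format, OF assms(2)])
  then show ?thesis by simp
qed

lemma row_in: "r \<in> {1..k} \<Longrightarrow> M r \<in> rowspan k M"
  unfolding rowspan_def
proof (intro CollectI exI[of _ "\<lambda>r'. if r' = r then 1 else 0"] conjI)
  assume r: "r \<in> {1..k}"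
  show "M r = (\<lambda>c. \<Sum>r'\<in>{1..k}. (if r' = r then 1 else 0) * M r' c)"
  proof
    fix c
    have "(\<Sum>r'\<in>{1..k}. (if r' = r then 1 else 0) * M r' c) = (\<Sum>r'\<in>{1..k}. if r' = r then M r c else 0)"
      by (rule sum.cong) auto
    also have "\<dots> = M r c" using r by simp
    finally show "M r c = (\<Sum>r'\<in>{1..k}. (if r' = r then 1 else 0) * M r' c)" by simp
  qed
qed simp

lemma rowspan_sub:
  assumes "lin X" "\<And>r. r \<in> {1..k} \<Longrightarrow> M r \<in> X"
  shows "rowspan k M \<subseteq> X"
proof
  fix x assume "x \<in> rowspan k M"
  then obtain a where x: "x = (\<lambda>c. \<Sum>r\<in>{1..k}. a r * M r c)" unfolding rowspan_def by blast
  show "x \<in> X" unfolding x by (rule lin_sum[where f=M and b=a, OF assms(1) finite_atLeastAtMost assms(2)])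
qed

lemma rowspan_supp:
  assumes "is_mat k n M" "x \<in> rowspan k M"
  shows "x \<in> supp_on {1..n}"
proof -
  obtain a where x: "x = (\<lambda>c. \<Sum>r\<in>{1..k}. a r * M r c)" using assms(2) unfolding rowspan_def by blast
  show ?thesis unfolding supp_on_def
  proof (intro CollectI allI impI)
    fix c assume xc: "x c \<noteq> 0"
    show "c \<in> {1..n}"
    proof (rule ccontr)
      assume "c \<notin> {1..n}"
      then have "\<forall>r. M r c = 0" using assms(1) unfolding is_mat_def by blast
      then have "x c = 0" unfolding x by simp
      then show False using xc by simp
    qed
  qed
qed



lemma rowspan_bij:
  fixes M :: "nat \<Rightarrow> nat \<Rightarrow> 'a::field"
  assumes "rows_indep k M"
  shows "bij_betw (\<lambda>a c. \<Sum>r\<in>{1..k}. a r * M r c) (supp_on {1..k}) (rowspan k M)"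
  unfolding bij_betw_def
proof
  show "inj_on (\<lambda>a c. \<Sum>r\<in>{1..k}. a r * M r c) (supp_on {1..k})"
  proof (rule inj_onI)
    fix a b assume a: "a \<in> supp_on {1..k}" and b: "b \<in> supp_on {1..k}"
      and e: "(\<lambda>c. \<Sum>r\<in>{1..k}. a r * M r c) = (\<lambda>c. \<Sum>r\<in>{1..k}. b r * M r c)"
    have "\<forall>c. (\<Sum>r\<in>{1..k}. (a r - b r) * M r c) = 0"
    proof
      fix c
      have "(\<Sum>r\<in>{1..k}. a r * M r c) = (\<Sum>r\<in>{1..k}. b r * M r c)" using e by meson
      then show "(\<Sum>r\<in>{1..k}. (a r - b r) * M r c) = 0"
        by (simp add: left_diff_distrib sum_subtractf)
    qed
    then have "\<forall>r\<in>{1..k}. a r - b r = 0"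
      using spec[OF assms[unfolded rows_indep_def], of "\<lambda>r. a r - b r"] by simp
    then show "a = b"
    proof (intro ext)
      fix r assume h: "\<forall>r\<in>{1..k}. a r - b r = 0"
      show "a r = b r"
      proof (cases "r \<in> {1..k}")
        case True then show ?thesis using h by simp
      next
        case False
        then have "a r = 0" "b r = 0" using a b unfolding supp_on_def by auto
        then show ?thesis by simp
      qed
    qed
  qed
next
  show "(\<lambda>a c. \<Sum>r\<in>{1..k}. a r * M r c) ` supp_on {1..k} = rowspan k M"
  proof
    show "(\<lambda>a c. \<Sum>r\<in>{1..k}. a r * M r c) ` supp_on {1..k} \<subseteq> rowspan k M"
      unfolding rowspan_def by blast
  next
    show "rowspan k M \<subseteq> (\<lambda>a c. \<Sum>r\<in>{1..k}. a r * M r c) ` supp_on {1..k}"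
    proof
      fix x assume "x \<in> rowspan k M"
      then obtain a where x: "x = (\<lambda>c. \<Sum>r\<in>{1..k}. a r * M r c)" unfolding rowspan_def by blast
      let ?a = "\<lambda>r. if r \<in> {1..k} then a r else 0"
      have 1: "?a \<in> supp_on {1..k}" unfolding supp_on_def by auto
      have 2: "x = (\<lambda>a c. \<Sum>r\<in>{1..k}. a r * M r c) ?a" unfolding x by simp
      show "x \<in> (\<lambda>a c. \<Sum>r\<in>{1..k}. a r * M r c) ` supp_on {1..k}" by (rule image_eqI[where x="?a"]) (use 1 2 in simp_all)
    qed
  qed
qed

lemma card_rowspan:
  fixes M :: "nat \<Rightarrow> nat \<Rightarrow> 'a::{field,finite}"
  assumes "rows_indep k M"
  shows "finite (rowspan k M) \<and> card (rowspan k M) = card (UNIV::'a set) ^ k"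
proof -
  have f: "finite (supp_on {1..k} :: (nat \<Rightarrow> 'a) set)" and c: "card (supp_on {1..k} :: (nat \<Rightarrow> 'a) set) = card (UNIV::'a set) ^ k"
    using supp_on_card[of "{1..k}", where 'a='a] by auto
  show ?thesis using bij_betw_finite[OF rowspan_bij[OF assms]] bij_betw_same_card[OF rowspan_bij[OF assms]] f c by simp
qed

definition LX :: "(nat \<Rightarrow> 'a::zero) set \<Rightarrow> nat set" where
  "LX X = {vlead x | x. x \<in> X \<and> x \<noteq> (\<lambda>_. 0)}"

lemma LX_rref:
  fixes M :: "nat \<Rightarrow> nat \<Rightarrow> 'a::field"
  assumes R: "is_rref k n M"
  shows "LX (rowspan k M) = lead_pos M ` {1..k}"
proof
  show "LX (rowspan k M) \<subseteq> lead_pos M ` {1..k}"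
  proof
    fix l assume "l \<in> LX (rowspan k M)"
    then obtain x where l: "l = vlead x" and xX: "x \<in> rowspan k M" and xnz: "x \<noteq> (\<lambda>_. 0)"
      unfolding LX_def by blast
    obtain a where x: "x = (\<lambda>c. \<Sum>r\<in>{1..k}. a r * M r c)" using xX unfolding rowspan_def by blast
    let ?S = "{r\<in>{1..k}. a r \<noteq> 0}"
    have Sne: "?S \<noteq> {}"
    proof
      assume "?S = {}"
      then have "\<forall>r\<in>{1..k}. a r = 0" by auto
      then have "x = (\<lambda>_. 0)" unfolding x by simp
      then show False using xnz by simp
    qed
    define r0 where "r0 = Min ?S"
    have r0S: "r0 \<in> ?S" unfolding r0_def using Sne by (intro Min_in) auto
    then have r0: "r0 \<in> {1..k}" by simp
    have r0min: "\<And>r. r \<in> ?S \<Longrightarrow> r0 \<le> r" unfolding r0_def by simp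
    have "x (lead_pos M r0) = a r0" unfolding x using R_comb[OF R r0] .
    then have x1: "x (lead_pos M r0) \<noteq> 0" using r0S by simp
    have x2: "x c' = 0" if c': "c' > lead_pos M r0" for c'
    proof -
      have h: "\<And>r. r \<in> {1..k} \<Longrightarrow> a r * M r c' = 0"
      proof -
        fix r assume r: "r \<in> {1..k}"
        show "a r * M r c' = 0"
        proof (cases "a r = 0")
          case False
          then have "r0 \<le> r" using r0min r by simp
          then have "lead_pos M r \<le> lead_pos M r0" using R_dec_le[OF R r0 r] by simp
          then have "M r c' = 0" using R_after[OF R r] c' by simp
          then show ?thesis by simp
        qed simp
      qed
      show ?thesis unfolding x using h by (intro sum.neutral) blast
    qed
    have "vlead x = lead_pos M r0" using vlead_eq[of x "lead_pos M r0", OF x1 x2] .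
    then show "l \<in> lead_pos M ` {1..k}" using l r0 by simp
  qed
next
  show "lead_pos M ` {1..k} \<subseteq> LX (rowspan k M)"
  proof
    fix l assume "l \<in> lead_pos M ` {1..k}"
    then obtain r where r: "r \<in> {1..k}" and l: "l = lead_pos M r" by blast
    have "M r \<in> rowspan k M" using row_in[OF r] .
    moreover have "M r \<noteq> (\<lambda>_. 0)" using R_nz[OF R r] by (metis one_neq_zero)
    ultimately show "l \<in> LX (rowspan k M)" unfolding LX_def l lead_pos_vlead by blast
  qed
qed

lemma dec_unique:
  fixes f g :: "nat \<Rightarrow> nat"
  assumes f: "\<And>r r'. r \<in> {1..k} \<Longrightarrow> r' \<in> {1..k} \<Longrightarrow> r < r' \<Longrightarrow> f r' < f r"
    and g: "\<And>r r'. r \<in> {1..k} \<Longrightarrow> r' \<in> {1..k} \<Longrightarrow> r < r' \<Longrightarrow> g r' < g r"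
    and im: "f ` {1..k} = g ` {1..k}"
  shows "r \<in> {1..k} \<Longrightarrow> f r = g r"
proof (induction r rule: less_induct)
  case (less r)
  have fg: "f r \<le> g r"
  proof -
    have "f r \<in> g ` {1..k}" using im less.prems by blast
    then obtain s where s: "s \<in> {1..k}" "f r = g s" by blast
    have "\<not> s < r"
    proof
      assume "s < r"
      then have "f s = g s" using less.IH s(1) by blast
      then have "f s = f r" using s by simp
      moreover have "f r < f s" using f[OF s(1) less.prems \<open>s < r\<close>] .
      ultimately show False by simp
    qed
    then have "r \<le> s" by simp
    then show ?thesis using g[OF less.prems s(1)] s(2) by (cases "r = s") auto
  qed
  have gf: "g r \<le> f r"
  proof -
    have "g r \<in> f ` {1..k}" using im less.prems by blast
    then obtain s where s: "s \<in> {1..k}" "g r = f s" by blast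
    have "\<not> s < r"
    proof
      assume "s < r"
      then have "f s = g s" using less.IH s(1) by blast
      then have "g s = g r" using s by simp
      moreover have "g r < g s" using g[OF s(1) less.prems \<open>s < r\<close>] .
      ultimately show False by simp
    qed
    then have "r \<le> s" by simp
    then show ?thesis using f[OF less.prems s(1)] s(2) by (cases "r = s") auto
  qed
  show ?case using fg gf by simp
qed

lemma rref_unique:
  fixes M M' :: "nat \<Rightarrow> nat \<Rightarrow> 'a::field"
  assumes R: "is_rref k n M" and R': "is_rref k n M'" and e: "rowspan k M = rowspan k M'"
  shows "M = M'"
proof -
  have im: "lead_pos M ` {1..k} = lead_pos M' ` {1..k}"
    using LX_rref[OF R] LX_rref[OF R'] e by simp
  have L: "\<And>r. r \<in> {1..k} \<Longrightarrow> lead_pos M r = lead_pos M' r"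
    by (rule dec_unique[OF R_dec[OF R] R_dec[OF R'] im])
  have rows: "M r = M' r" if r: "r \<in> {1..k}" for r
  proof -
    let ?d = "\<lambda>c. M r c - M' r c"
    have m': "M' r \<in> rowspan k M" using row_in[OF r, of M'] e by simp
    have "?d \<in> rowspan k M" by (rule lin_diff[OF lin_rowspan row_in[OF r] m'])
    then obtain a where d: "?d = (\<lambda>c. \<Sum>r\<in>{1..k}. a r * M r c)" unfolding rowspan_def by blast
    have a0: "a r' = 0" if r': "r' \<in> {1..k}" for r'
    proof -
      have "?d (lead_pos M r') = a r'" using fun_cong[OF d, of "lead_pos M r'"] R_comb[OF R r', of a] by simp
      moreover have "M r (lead_pos M r') = M' r (lead_pos M r')"
        using R_piv[OF R r' r] R_piv[OF R' r' r] L[OF r'] by simp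
      ultimately show ?thesis by simp
    qed
    have d0: "?d = (\<lambda>_. 0)" unfolding d using a0 by simp
    show ?thesis
    proof
      fix c have "?d c = 0" using fun_cong[OF d0, of c] by simp
      then show "M r c = M' r c" by simp
    qed
  qed
  show ?thesis
  proof (intro ext)
    fix r c
    show "M r c = M' r c"
    proof (cases "r \<in> {1..k}")
      case True then show ?thesis using rows by simp
    next
      case False
      then have "M r c = 0" "M' r c = 0" using R_mat[OF R] R_mat[OF R'] unfolding is_mat_def by auto
      then show ?thesis by simp
    qed
  qed
qed



lemma card_field_ge2: "card (UNIV :: 'a::{field,finite} set) \<ge> 2"
proof -
  have "card {0::'a, 1} = 2" by simp
  moreover have "card {0::'a, 1} \<le> card (UNIV :: 'a set)" by (rule card_mono) auto
  ultimately show ?thesis by simp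
qed

lemma rref_exists:
  fixes M :: "nat \<Rightarrow> nat \<Rightarrow> 'a::{field,finite}"
  assumes mat: "is_mat k n M" and ind: "rows_indep k M"
  shows "\<exists>M'. is_rref k n M' \<and> rowspan k M' = rowspan k M"
proof -
  define X where "X = rowspan k M"
  define Q where "Q = card (UNIV :: 'a set)"
  have Q2: "Q \<ge> 2" unfolding Q_def by (rule card_field_ge2)
  have fX: "finite X" and cX: "card X = Q ^ k" using card_rowspan[OF ind] unfolding X_def Q_def by auto
  have linX: "lin X" unfolding X_def by (rule lin_rowspan)
  have supX: "\<And>x. x \<in> X \<Longrightarrow> x \<in> supp_on {1..n}" unfolding X_def using rowspan_supp[OF mat] by blast
  have bnd: "\<And>x c. x \<in> X \<Longrightarrow> x c \<noteq> 0 \<Longrightarrow> c \<le> n"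
    using supX unfolding supp_on_def by fastforce
  define L where "L = LX X"
  have Lsub: "L \<subseteq> {1..n}"
  proof
    fix l assume "l \<in> L"
    then obtain x where x: "x \<in> X" "x \<noteq> (\<lambda>_. 0)" "l = vlead x" unfolding L_def LX_def by blast
    then obtain c where "x c \<noteq> 0" by auto
    moreover have "\<forall>c. x c \<noteq> 0 \<longrightarrow> c \<in> {1..n}" using supX[OF x(1)] unfolding supp_on_def by blast
    ultimately show "l \<in> {1..n}" using is_vec_supp x(3) by blast
  qed
  have fL: "finite L" using Lsub finite_subset by blast
  have key0: "x = (\<lambda>_. 0)" if x: "x \<in> X" "\<And>l. l \<in> L \<Longrightarrow> x l = 0" for x
  proof (rule ccontr)
    assume nz: "x \<noteq> (\<lambda>_. 0)"
    then obtain c where c: "x c \<noteq> 0" by auto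
    have "vlead x \<in> L" unfolding L_def LX_def using x(1) nz by blast
    moreover have "x (vlead x) \<noteq> 0" using vlead_props(1)[of x n c] bnd[OF x(1)] c by blast
    ultimately show False using x(2) by blast
  qed
  define \<phi> where "\<phi> = (\<lambda>(x::nat \<Rightarrow> 'a) c. if c \<in> L then x c else 0)"
  have inj\<phi>: "inj_on \<phi> X"
  proof (rule inj_onI)
    fix x y assume x: "x \<in> X" and y: "y \<in> X" and e: "\<phi> x = \<phi> y"
    have d: "(\<lambda>c. x c - y c) \<in> X" by (rule lin_diff[OF linX x y])
    have "\<And>l. l \<in> L \<Longrightarrow> x l - y l = 0"
    proof -
      fix l assume l: "l \<in> L"
      have "\<phi> x l = \<phi> y l" using e by simp
      then show "x l - y l = 0" using l unfolding \<phi>_def by simp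
    qed
    then have "(\<lambda>c. x c - y c) = (\<lambda>_. 0)" using key0[OF d] by blast
    then show "x = y"
    proof (intro ext)
      fix c assume "(\<lambda>c. x c - y c) = (\<lambda>_. 0)"
      then have "x c - y c = 0" by meson
      then show "x c = y c" by simp
    qed
  qed
  have im\<phi>: "\<phi> ` X \<subseteq> supp_on L" unfolding \<phi>_def supp_on_def by (auto split: if_splits)
  have fSL: "finite (supp_on L :: (nat \<Rightarrow> 'a) set)" and cSL: "card (supp_on L :: (nat \<Rightarrow> 'a) set) = Q ^ card L"
    using supp_on_card[OF fL, where 'a='a] unfolding Q_def by auto
  have le1: "Q ^ k \<le> Q ^ card L"
    using card_inj_on_le[OF inj\<phi> im\<phi> fSL] cX cSL by simp
  define xl where "xl = (\<lambda>l. SOME x. x \<in> X \<and> x \<noteq> (\<lambda>_. 0) \<and> vlead x = l)"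
  have xl: "xl l \<in> X \<and> xl l \<noteq> (\<lambda>_. 0) \<and> vlead (xl l) = l" if l: "l \<in> L" for l
  proof -
    have "\<exists>x. x \<in> X \<and> x \<noteq> (\<lambda>_. 0) \<and> vlead x = l" using l unfolding L_def LX_def by blast
    then show ?thesis unfolding xl_def by (rule someI_ex)
  qed
  have xl_l: "xl l l \<noteq> 0" if l: "l \<in> L" for l
  proof -
    obtain c where c: "xl l c \<noteq> 0" using xl[OF l] by auto
    show ?thesis using vlead_props(1)[of "xl l" n c] bnd xl[OF l] c by metis
  qed
  have xl_after: "xl l c = 0" if l: "l \<in> L" and c: "c > l" for l c
  proof -
    obtain c0 where c0: "xl l c0 \<noteq> 0" using xl[OF l] by auto
    show ?thesis using vlead_props(3)[of "xl l" n c0 c] bnd xl[OF l] c0 c by metis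
  qed
  define \<Lambda> where "\<Lambda> = (\<lambda>b c. \<Sum>l\<in>L. b l * xl l c)"
  have inj\<Lambda>: "inj_on \<Lambda> (supp_on L)"
  proof (rule inj_onI)
    fix b b' assume b: "b \<in> supp_on L" and b': "b' \<in> supp_on L" and e: "\<Lambda> b = \<Lambda> b'"
    define d where "d = (\<lambda>l. b l - b' l)"
    have dz: "(\<Sum>l\<in>L. d l * xl l c) = 0" for c
    proof -
      have "\<Lambda> b c = \<Lambda> b' c" using e by simp
      then show ?thesis unfolding \<Lambda>_def d_def by (simp add: left_diff_distrib sum_subtractf)
    qed
    have d0: "d l = 0" if l: "l \<in> L" for l
    proof (rule ccontr)
      assume "d l \<noteq> 0"
      define S where "S = {l\<in>L. d l \<noteq> 0}"
      have Sne: "S \<noteq> {}" and fS: "finite S" using l \<open>d l \<noteq> 0\<close> fL unfolding S_def by auto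
      define l0 where "l0 = Max S"
      have l0S: "l0 \<in> S" unfolding l0_def using Sne fS by (rule Max_in[rotated])
      then have l0L: "l0 \<in> L" and dl0: "d l0 \<noteq> 0" unfolding S_def by auto
      have "(\<Sum>l\<in>L. d l * xl l l0) = (\<Sum>l\<in>L. if l = l0 then d l0 * xl l0 l0 else 0)"
      proof (rule sum.cong)
        fix l assume lL: "l \<in> L"
        show "d l * xl l l0 = (if l = l0 then d l0 * xl l0 l0 else 0)"
        proof (cases "l = l0")
          case False
          show ?thesis
          proof (cases "d l = 0")
            case False
            then have "l \<in> S" using lL unfolding S_def by simp
            then have "l \<le> l0" unfolding l0_def using fS by simp
            then have "l < l0" using \<open>l \<noteq> l0\<close> by simp
            then have "xl l l0 = 0" using xl_after[OF lL] by simp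
            then show ?thesis using \<open>l \<noteq> l0\<close> by simp
          qed (simp add: \<open>l \<noteq> l0\<close>)
        qed simp
      qed simp
      also have "\<dots> = d l0 * xl l0 l0" using l0L fL by simp
      finally have "d l0 * xl l0 l0 = 0" using dz[of l0] by simp
      then show False using dl0 xl_l[OF l0L] by simp
    qed
    show "b = b'"
    proof
      fix l show "b l = b' l"
      proof (cases "l \<in> L")
        case True then show ?thesis using d0 unfolding d_def by fastforce
      next
        case False
        then have "b l = 0" "b' l = 0" using b b' unfolding supp_on_def by auto
        then show ?thesis by simp
      qed
    qed
  qed
  have im\<Lambda>: "\<Lambda> ` supp_on L \<subseteq> X"
  proof
    fix x assume "x \<in> \<Lambda> ` supp_on L"
    then obtain b where x: "x = \<Lambda> b" by blast
    have "(\<lambda>c. \<Sum>l\<in>L. b l * xl l c) \<in> X" by (rule lin_sum[OF linX fL]) (use xl in blast)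
    then show "x \<in> X" unfolding x \<Lambda>_def .
  qed
  have le2: "Q ^ card L \<le> Q ^ k"
    using card_inj_on_le[OF inj\<Lambda> im\<Lambda> fX] cX cSL by simp
  have cL: "card L = k"
    using le1 le2 Q2 power_le_imp_le_exp[of Q] by (meson le_antisym one_less_numeral_iff semiring_norm(76) less_le_trans)
  have im\<phi>eq: "\<phi> ` X = supp_on L"
  proof (rule card_subset_eq[OF fSL im\<phi>])
    show "card (\<phi> ` X) = card (supp_on L :: (nat \<Rightarrow> 'a) set)" using card_image[OF inj\<phi>] cX cSL cL by simp
  qed
  define \<delta> where "\<delta> = (\<lambda>(l::nat) (c::nat). if c = l then (1::'a) else 0)"
  have \<delta>S: "\<delta> l \<in> supp_on L" if "l \<in> L" for l using that unfolding \<delta>_def supp_on_def by auto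
  define y where "y = (\<lambda>l. inv_into X \<phi> (\<delta> l))"
  have yX: "y l \<in> X" if l: "l \<in> L" for l
    unfolding y_def using \<delta>S[OF l] im\<phi>eq by (metis inv_into_into)
  have y\<phi>: "\<phi> (y l) = \<delta> l" if l: "l \<in> L" for l
    unfolding y_def using \<delta>S[OF l] im\<phi>eq by (metis f_inv_into_f)
  have yL: "y l c = (if c = l then 1 else 0)" if l: "l \<in> L" and c: "c \<in> L" for l c
  proof -
    have "\<phi> (y l) c = \<delta> l c" using y\<phi>[OF l] by simp
    then show ?thesis using c unfolding \<phi>_def \<delta>_def by simp
  qed
  have yll: "y l l = 1" if l: "l \<in> L" for l using yL[OF l l] by simp
  have yafter: "y l c = 0" if l: "l \<in> L" and c: "c > l" for l c
  proof -
    have nz: "y l \<noteq> (\<lambda>_. 0)" using yll[OF l] by (metis one_neq_zero)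
    have vL: "vlead (y l) \<in> L" unfolding L_def LX_def using yX[OF l] nz by blast
    have "y l (vlead (y l)) \<noteq> 0" using vlead_props(1)[of "y l" n l] bnd[OF yX[OF l]] yll[OF l] by simp
    then have "vlead (y l) = l" using yL[OF l vL] by (metis one_neq_zero)
    then show ?thesis using vlead_props(3)[of "y l" n l c] bnd[OF yX[OF l]] yll[OF l] c by simp
  qed
  define xs where "xs = sorted_list_of_set L"
  have lxs: "length xs = k" unfolding xs_def using cL by simp
  have sxs: "set xs = L" unfolding xs_def using fL by simp
  have srt: "sorted_wrt (<) xs" unfolding xs_def by simp
  define s where "s = (\<lambda>r. xs ! (k - r))"
  have sL: "s r \<in> L" if r: "r \<in> {1..k}" for r
  proof -
    have "k - r < length xs" using r lxs by auto
    then show ?thesis unfolding s_def using sxs nth_mem by blast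
  qed
  have sdec: "s r' < s r" if r: "r \<in> {1..k}" and r': "r' \<in> {1..k}" and rr: "r < r'" for r r'
  proof -
    have "k - r' < k - r" "k - r < length xs" using r r' rr lxs by auto
    then show ?thesis unfolding s_def using sorted_wrt_nth_less[OF srt] by blast
  qed
  define M' where "M' = (\<lambda>r c. if r \<in> {1..k} then y (s r) c else 0)"
  have M'r: "M' r = y (s r)" if r: "r \<in> {1..k}" for r using r unfolding M'_def by auto
  have leadM': "lead_pos M' r = s r" if r: "r \<in> {1..k}" for r
    unfolding lead_pos_vlead M'r[OF r]
    by (rule vlead_eq) (use yll[OF sL[OF r]] yafter[OF sL[OF r]] in auto)
  have R': "is_rref k n M'"
    unfolding is_rref_def
  proof (intro conjI ballI impI)
    show "is_mat k n M'" unfolding is_mat_def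
    proof (intro allI impI)
      fix r c assume h: "M' r c \<noteq> 0"
      then have r: "r \<in> {1..k}" unfolding M'_def by (auto split: if_splits)
      then have "y (s r) c \<noteq> 0" using h M'r by simp
      then have "c \<in> {1..n}" using supX[OF yX[OF sL[OF r]]] unfolding supp_on_def by blast
      then show "r \<in> {1..k} \<and> c \<in> {1..n}" using r by simp
    qed
  next
    fix r assume r: "r \<in> {1..k}"
    show "\<exists>c. M' r c \<noteq> 0" using yll[OF sL[OF r]] M'r[OF r] by (metis one_neq_zero)
    show "M' r (lead_pos M' r) = 1" using yll[OF sL[OF r]] M'r[OF r] leadM'[OF r] by simp
  next
    fix r r' assume r: "r \<in> {1..k}" and r': "r' \<in> {1..k}"
    show "r < r' \<Longrightarrow> lead_pos M' r' < lead_pos M' r" using sdec[OF r r'] leadM'[OF r] leadM'[OF r'] by simp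
    assume ne: "r' \<noteq> r"
    have "s r' \<noteq> s r" using sdec[OF r r'] sdec[OF r' r] ne by (cases "r < r'") auto
    then show "M' r' (lead_pos M' r) = 0"
      using M'r[OF r'] leadM'[OF r] yL[OF sL[OF r'] sL[OF r]] by simp
  qed
  have sub: "rowspan k M' \<subseteq> X" by (rule rowspan_sub[OF linX]) (use M'r yX sL in auto)
  have "card (rowspan k M') = Q ^ k" using card_rowspan[OF R_indep[OF R']] unfolding Q_def by simp
  then have "rowspan k M' = X" using card_subset_eq[OF fX sub] cX by simp
  then show ?thesis using R' unfolding X_def by blast
qed



definition cons :: "(nat \<Rightarrow> 'a::zero) \<Rightarrow> (nat \<Rightarrow> nat \<Rightarrow> 'a) \<Rightarrow> nat \<Rightarrow> nat \<Rightarrow> 'a" where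
  "cons a N = (\<lambda>r c. if c = 1 then a r else if c \<ge> 2 then N r (c - 1) else 0)"

definition ek :: "nat \<Rightarrow> nat \<Rightarrow> 'a::{zero,one}" where
  "ek k = (\<lambda>r. if r = k then 1 else 0)"

definition tlm :: "(nat \<Rightarrow> nat \<Rightarrow> 'a::zero) \<Rightarrow> nat \<Rightarrow> nat \<Rightarrow> 'a" where
  "tlm M = (\<lambda>r c. if c = 0 then 0 else M r (Suc c))"

lemma cons_1 [simp]: "cons a N r (Suc 0) = a r" unfolding cons_def by simp
lemma cons_0 [simp]: "cons a N r 0 = 0" unfolding cons_def by simp
lemma cons_Suc [simp]: "c \<ge> 1 \<Longrightarrow> cons a N r (Suc c) = N r c" unfolding cons_def by simp

lemma tlm_cons: "is_mat k m N \<Longrightarrow> tlm (cons a N) = N"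
  unfolding tlm_def is_mat_def by (intro ext) (auto simp: cons_def)

lemma cons_tlm: "is_mat k n M \<Longrightarrow> cons (\<lambda>r. M r 1) (tlm M) = M"
  unfolding tlm_def is_mat_def cons_def
proof (intro ext)
  fix r c assume h: "\<forall>r c. M r c \<noteq> 0 \<longrightarrow> r \<in> {1..k} \<and> c \<in> {1..n}"
  show "(if c = 1 then M r 1 else if 2 \<le> c then if c - 1 = 0 then 0 else M r (Suc (c - 1)) else 0) = M r c"
  proof (cases "c = 0")
    case True then show ?thesis using h by auto
  next
    case False then show ?thesis by (cases "c = 1") auto
  qed
qed

lemma cons_inj: "is_mat k m N \<Longrightarrow> is_mat k' m' N' \<Longrightarrow> cons a N = cons a' N' \<Longrightarrow> a = a' \<and> N = N'"
proof -
  assume N: "is_mat k m N" and N': "is_mat k' m' N'" and e: "cons a N = cons a' N'"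
  have "a = a'"
  proof
    fix r show "a r = a' r" using fun_cong[OF fun_cong[OF e, of r], of 1] by simp
  qed
  moreover have "N = N'" using tlm_cons[OF N, of a] tlm_cons[OF N', of a'] e by simp
  ultimately show ?thesis by simp
qed

lemma lead_cons:
  assumes "N r l \<noteq> 0" "l \<ge> 1" "\<And>c. c > l \<Longrightarrow> N r c = 0"
  shows "lead_pos (cons a N) r = Suc l"
  unfolding lead_pos_vlead
proof (rule vlead_eq)
  show "cons a N r (Suc l) \<noteq> 0" using assms by simp
  fix c' assume "c' > Suc l"
  then obtain c where c: "c' = Suc c" "c > l" by (cases c') auto
  then show "cons a N r c' = 0" using assms by simp
qed

lemma lead_tlm:
  assumes "M r l \<noteq> 0" "l \<ge> 2" "\<And>c. c > l \<Longrightarrow> M r c = 0"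
  shows "lead_pos (tlm M) r = l - 1"
  unfolding lead_pos_vlead
proof (rule vlead_eq)
  show "tlm M r (l - 1) \<noteq> 0" using assms unfolding tlm_def by (simp add: Suc_diff_1)
  fix c' assume "c' > l - 1"
  then show "tlm M r c' = 0" using assms unfolding tlm_def by simp
qed

lemma R_lead_facts:
  assumes R: "is_rref k n M" and r: "r \<in> {1..k}"
  shows "M r (lead_pos M r) \<noteq> 0" "lead_pos M r \<ge> 1" "\<And>c. c > lead_pos M r \<Longrightarrow> M r c = 0"
  using R_nz[OF R r] R_range[OF R r] R_after[OF R r] by auto

lemma cons_rref:
  assumes N: "is_rref k m N" and a: "a \<in> supp_on {1..k}"
  shows "is_rref k (Suc m) (cons a N)" "\<And>r. r \<in> {1..k} \<Longrightarrow> lead_pos (cons a N) r = Suc (lead_pos N r)"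
proof -
  show L: "\<And>r. r \<in> {1..k} \<Longrightarrow> lead_pos (cons a N) r = Suc (lead_pos N r)"
  proof -
    fix r assume r: "r \<in> {1..k}"
    show "lead_pos (cons a N) r = Suc (lead_pos N r)"
      by (rule lead_cons[of N r "lead_pos N r" a, OF R_lead_facts(1)[OF N r] R_lead_facts(2)[OF N r] R_lead_facts(3)[OF N r]])
  qed
  show "is_rref k (Suc m) (cons a N)"
    unfolding is_rref_def
  proof (intro conjI ballI impI)
    show "is_mat k (Suc m) (cons a N)" unfolding is_mat_def
    proof (intro allI impI)
      fix r c assume h: "cons a N r c \<noteq> 0"
      show "r \<in> {1..k} \<and> c \<in> {1..Suc m}"
      proof (cases "c = 1")
        case True then show ?thesis using h a unfolding supp_on_def by auto
      next
        case False
        then obtain c0 where c0: "c = Suc c0" "c0 \<ge> 1" using h by (cases c) auto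
        then have "N r c0 \<noteq> 0" using h by simp
        then show ?thesis using R_mat[OF N] c0 unfolding is_mat_def by auto
      qed
    qed
  next
    fix r assume r: "r \<in> {1..k}"
    show "\<exists>c. cons a N r c \<noteq> 0" using L[OF r] R_lead_facts[OF N r] by (metis cons_Suc)
    show "cons a N r (lead_pos (cons a N) r) = 1" using L[OF r] R_nz[OF N r] R_range[OF N r] by simp
  next
    fix r r' assume r: "r \<in> {1..k}" and r': "r' \<in> {1..k}"
    show "r < r' \<Longrightarrow> lead_pos (cons a N) r' < lead_pos (cons a N) r"
      using L[OF r] L[OF r'] R_dec[OF N r r'] by simp
    show "r' \<noteq> r \<Longrightarrow> cons a N r' (lead_pos (cons a N) r) = 0"
      using L[OF r] R_piv[OF N r r'] R_range[OF N r] by simp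
  qed
qed

lemma consp_rref:
  assumes N: "is_rref (k - 1) m N" and k: "k \<ge> 1"
  shows "is_rref k (Suc m) (cons (ek k) N)"
    "\<And>r. r \<in> {1..k - 1} \<Longrightarrow> lead_pos (cons (ek k) N) r = Suc (lead_pos N r)"
    "lead_pos (cons (ek k) N) k = 1"
proof -
  show L: "\<And>r. r \<in> {1..k - 1} \<Longrightarrow> lead_pos (cons (ek k) N) r = Suc (lead_pos N r)"
  proof -
    fix r assume r: "r \<in> {1..k - 1}"
    show "lead_pos (cons (ek k) N) r = Suc (lead_pos N r)"
      by (rule lead_cons[of N r "lead_pos N r" "ek k", OF R_lead_facts(1)[OF N r] R_lead_facts(2)[OF N r] R_lead_facts(3)[OF N r]])
  qed
  have Nk: "N k c = 0" for c
  proof (rule ccontr)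
    assume "N k c \<noteq> 0"
    then have "k \<le> k - 1" using R_mat[OF N] unfolding is_mat_def by auto
    then show False using k by simp
  qed
  show Lk: "lead_pos (cons (ek k) N) k = 1"
    unfolding lead_pos_vlead
  proof (rule vlead_eq)
    show "cons (ek k) N k 1 \<noteq> 0" by (simp add: ek_def)
    fix c' assume "c' > (1::nat)"
    then obtain c where "c' = Suc c" "c \<ge> 1" by (cases c') auto
    then show "cons (ek k) N k c' = 0" using Nk by simp
  qed
  have LL: "lead_pos (cons (ek k) N) r = (if r = k then 1 else Suc (lead_pos N r))" if r: "r \<in> {1..k}" for r
    using L Lk r by (cases "r = k") auto
  show "is_rref k (Suc m) (cons (ek k) N)"
    unfolding is_rref_def
  proof (intro conjI ballI impI)
    show "is_mat k (Suc m) (cons (ek k) N)" unfolding is_mat_def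
    proof (intro allI impI)
      fix r c assume h: "cons (ek k) N r c \<noteq> 0"
      show "r \<in> {1..k} \<and> c \<in> {1..Suc m}"
      proof (cases "c = 1")
        case True then show ?thesis using h k by (auto simp: ek_def split: if_splits)
      next
        case False
        then obtain c0 where c0: "c = Suc c0" "c0 \<ge> 1" using h by (cases c) auto
        then have "N r c0 \<noteq> 0" using h by simp
        then have "r \<in> {1..k-1} \<and> c0 \<in> {1..m}" using R_mat[OF N] unfolding is_mat_def by blast
        then show ?thesis using c0 by auto
      qed
    qed
  next
    fix r assume r: "r \<in> {1..k}"
    show "\<exists>c. cons (ek k) N r c \<noteq> 0"
    proof (cases "r = k")
      case True then show ?thesis by (intro exI[of _ 1]) (simp add: ek_def)
    next
      case False
      then have r1: "r \<in> {1..k-1}" using r by auto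
      then show ?thesis using R_lead_facts[OF N r1] by (metis cons_Suc)
    qed
    show "cons (ek k) N r (lead_pos (cons (ek k) N) r) = 1"
    proof (cases "r = k")
      case True then show ?thesis using Lk by (simp add: ek_def)
    next
      case False
      then have r1: "r \<in> {1..k-1}" using r by auto
      then show ?thesis using L[OF r1] R_nz[OF N r1] R_range[OF N r1] by simp
    qed
  next
    fix r r' assume r: "r \<in> {1..k}" and r': "r' \<in> {1..k}"
    show "r < r' \<Longrightarrow> lead_pos (cons (ek k) N) r' < lead_pos (cons (ek k) N) r"
    proof -
      assume rr: "r < r'"
      then have r1: "r \<in> {1..k-1}" using r r' by auto
      show ?thesis
      proof (cases "r' = k")
        case True then show ?thesis using LL[OF r] LL[OF r'] rr R_range[OF N r1] by simp
      next
        case False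
        then have r1': "r' \<in> {1..k-1}" using r' by auto
        have "r \<noteq> k" "r' \<noteq> k" using r1 r1' k by auto
        then show ?thesis using LL[OF r] LL[OF r'] R_dec[OF N r1 r1' rr] by simp
      qed
    qed
    show "r' \<noteq> r \<Longrightarrow> cons (ek k) N r' (lead_pos (cons (ek k) N) r) = 0"
    proof -
      assume ne: "r' \<noteq> r"
      show ?thesis
      proof (cases "r = k")
        case True then show ?thesis using Lk ne by (simp add: ek_def)
      next
        case False
        then have r1: "r \<in> {1..k-1}" using r by auto
        show ?thesis
        proof (cases "r' = k")
          case True then show ?thesis using L[OF r1] R_range[OF N r1] Nk by simp
        next
          case False
          then have r1': "r' \<in> {1..k-1}" using r' by auto
          show ?thesis using L[OF r1] R_piv[OF N r1 r1'] R_range[OF N r1] ne by simp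
        qed
      qed
    qed
  qed
qed



lemma tlm_rref:
  assumes R: "is_rref k (Suc m) M" and kk: "k' \<le> k"
    and lead2: "\<And>r. r \<in> {1..k'} \<Longrightarrow> lead_pos M r \<ge> 2"
    and zero: "\<And>r c. r \<notin> {1..k'} \<Longrightarrow> c \<ge> 2 \<Longrightarrow> M r c = 0"
  shows "is_rref k' m (tlm M)" "\<And>r. r \<in> {1..k'} \<Longrightarrow> lead_pos (tlm M) r = lead_pos M r - 1"
proof -
  have rk: "r \<in> {1..k}" if "r \<in> {1..k'}" for r using that kk by auto
  show L: "\<And>r. r \<in> {1..k'} \<Longrightarrow> lead_pos (tlm M) r = lead_pos M r - 1"
  proof -
    fix r assume r: "r \<in> {1..k'}"
    show "lead_pos (tlm M) r = lead_pos M r - 1"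
      by (rule lead_tlm[of M r "lead_pos M r", OF R_lead_facts(1)[OF R rk[OF r]] lead2[OF r] R_lead_facts(3)[OF R rk[OF r]]])
  qed
  have tl_at: "tlm M r (lead_pos M r0 - 1) = M r (lead_pos M r0)" if r0: "r0 \<in> {1..k'}" for r r0
    using lead2[OF r0] unfolding tlm_def by (simp add: Suc_diff_1)
  show "is_rref k' m (tlm M)"
    unfolding is_rref_def
  proof (intro conjI ballI impI)
    show "is_mat k' m (tlm M)" unfolding is_mat_def
    proof (intro allI impI)
      fix r c assume h: "tlm M r c \<noteq> 0"
      then have c0: "c \<noteq> 0" and h': "M r (Suc c) \<noteq> 0" unfolding tlm_def by (auto split: if_splits)
      have "r \<in> {1..k'}" using zero[of r "Suc c"] h' c0 by (cases "r \<in> {1..k'}") auto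
      moreover have "Suc c \<in> {1..Suc m}" using R_mat[OF R] h' unfolding is_mat_def by blast
      ultimately show "r \<in> {1..k'} \<and> c \<in> {1..m}" using c0 by auto
    qed
  next
    fix r assume r: "r \<in> {1..k'}"
    show "tlm M r (lead_pos (tlm M) r) = 1" using L[OF r] tl_at[OF r] R_nz[OF R rk[OF r]] by simp
    then show "\<exists>c. tlm M r c \<noteq> 0" by (metis one_neq_zero)
  next
    fix r r' assume r: "r \<in> {1..k'}" and r': "r' \<in> {1..k'}"
    show "r < r' \<Longrightarrow> lead_pos (tlm M) r' < lead_pos (tlm M) r"
      using L[OF r] L[OF r'] R_dec[OF R rk[OF r] rk[OF r']] lead2[OF r] lead2[OF r'] by simp
    show "r' \<noteq> r \<Longrightarrow> tlm M r' (lead_pos (tlm M) r) = 0"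
      using L[OF r] tl_at[OF r] R_piv[OF R rk[OF r] rk[OF r']] by simp
  qed
qed

lemma rref_decomp:
  fixes M :: "nat \<Rightarrow> nat \<Rightarrow> 'a::field"
  assumes R: "is_rref k (Suc m) M"
  shows "(\<exists>a N. a \<in> supp_on {1..k} \<and> is_rref k m N \<and> M = cons a N) \<or>
         (k \<ge> 1 \<and> (\<exists>N. is_rref (k - 1) m N \<and> M = cons (ek k) N))"
proof (cases "\<exists>r\<in>{1..k}. lead_pos M r = 1")
  case True
  then obtain r where r: "r \<in> {1..k}" "lead_pos M r = 1" by blast
  have k: "k \<in> {1..k}" using r by auto
  have rk: "r = k"
  proof (rule ccontr)
    assume "r \<noteq> k"
    then have "r < k" using r by auto
    then have "lead_pos M k < 1" using R_dec[OF R r(1) k] r(2) by simp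
    then show False using R_range[OF R k] by simp
  qed
  have Lk: "lead_pos M k = 1" using r rk by simp
  have col1: "(\<lambda>r. M r 1) = ek k"
  proof
    fix r'
    show "M r' 1 = ek k r'"
    proof (cases "r' \<in> {1..k}")
      case True then show ?thesis using R_piv[OF R k True] Lk by (simp add: ek_def)
    next
      case False
      then have "M r' 1 = 0" using R_mat[OF R] unfolding is_mat_def by blast
      then show ?thesis using False k by (auto simp: ek_def)
    qed
  qed
  have lead2: "lead_pos M r' \<ge> 2" if r': "r' \<in> {1..k-1}" for r'
  proof -
    have "r' \<in> {1..k}" "r' < k" using r' by auto
    then show ?thesis using R_dec[OF R _ k, of r'] Lk by auto
  qed
  have zero: "M r' c = 0" if "r' \<notin> {1..k-1}" "c \<ge> 2" for r' c
  proof (cases "r' = k")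
    case True then show ?thesis using R_after[OF R k] Lk that by simp
  next
    case False
    then have "r' \<notin> {1..k}" using that by auto
    then show ?thesis using R_mat[OF R] unfolding is_mat_def by blast
  qed
  have N: "is_rref (k - 1) m (tlm M)" by (rule tlm_rref(1)[OF R _ lead2 zero]) simp
  have "M = cons (ek k) (tlm M)" using cons_tlm[OF R_mat[OF R]] col1 by simp
  then show ?thesis using N k by auto
next
  case False
  have lead2: "lead_pos M r' \<ge> 2" if r': "r' \<in> {1..k}" for r'
  proof -
    have "lead_pos M r' \<noteq> 1" using False r' by blast
    then show ?thesis using R_range[OF R r'] by simp
  qed
  have zero: "M r' c = 0" if "r' \<notin> {1..k}" "c \<ge> 2" for r' c
    using R_mat[OF R] that unfolding is_mat_def by blast
  have N: "is_rref k m (tlm M)" by (rule tlm_rref(1)[OF R _ lead2 zero]) simp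
  have a: "(\<lambda>r. M r 1) \<in> supp_on {1..k}" using R_mat[OF R] unfolding is_mat_def supp_on_def by blast
  have "M = cons (\<lambda>r. M r 1) (tlm M)" using cons_tlm[OF R_mat[OF R]] by simp
  then show ?thesis using N a by blast
qed

definition RR :: "nat \<Rightarrow> nat \<Rightarrow> (nat \<Rightarrow> nat \<Rightarrow> 'a::field) set" where
  "RR k n = {M. is_rref k n M}"

lemma RR_Suc:
  "RR k (Suc m) = (\<lambda>(a, N). cons a N) ` (supp_on {1..k} \<times> RR k m) \<union>
                  (if k \<ge> 1 then cons (ek k) ` RR (k - 1) m else {})"
proof
  show "RR k (Suc m) \<subseteq> (\<lambda>(a, N). cons a N) ` (supp_on {1..k} \<times> RR k m) \<union>
                  (if k \<ge> 1 then cons (ek k) ` RR (k - 1) m else {})"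
  proof
    fix M assume "M \<in> RR k (Suc m)"
    then have R: "is_rref k (Suc m) M" unfolding RR_def by simp
    show "M \<in> (\<lambda>(a, N). cons a N) ` (supp_on {1..k} \<times> RR k m) \<union>
                  (if k \<ge> 1 then cons (ek k) ` RR (k - 1) m else {})"
      using rref_decomp[OF R] unfolding RR_def by auto
  qed
next
  show "(\<lambda>(a, N). cons a N) ` (supp_on {1..k} \<times> RR k m) \<union>
                  (if k \<ge> 1 then cons (ek k) ` RR (k - 1) m else {}) \<subseteq> RR k (Suc m)"
    unfolding RR_def using cons_rref(1) consp_rref(1) by (auto split: if_splits)
qed

lemma RR_disj:
  assumes "k \<ge> 1"
  shows "(\<lambda>(a, N). cons a N) ` (supp_on {1..k} \<times> (RR k m :: (nat \<Rightarrow> nat \<Rightarrow> 'a::field) set)) \<inter> cons (ek k) ` (RR (k - 1) m :: (nat \<Rightarrow> nat \<Rightarrow> 'a) set) = {}"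
proof (rule ccontr)
  assume "\<not> ?thesis"
  then obtain a and N N' :: "nat \<Rightarrow> nat \<Rightarrow> 'a" where a: "a \<in> supp_on {1..k}" and N: "is_rref k m N" and N': "is_rref (k-1) m N'"
    and e: "cons a N = cons (ek k) N'" unfolding RR_def by auto
  have "N = N'" using cons_inj[OF R_mat[OF N] R_mat[OF N'] e] by simp
  have k: "k \<in> {1..k}" using assms by simp
  have "N k (lead_pos N k) \<noteq> 0" using R_nz[OF N k] by simp
  then have "k \<in> {1..k-1}" using R_mat[OF N'] \<open>N = N'\<close> unfolding is_mat_def by blast
  then show False by auto
qed

lemma RR_card:
  "finite (RR k n :: (nat \<Rightarrow> nat \<Rightarrow> 'a::{field,finite}) set) \<and>
   card (RR k n :: (nat \<Rightarrow> nat \<Rightarrow> 'a) set) = gb (card (UNIV::'a set)) n k"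
proof (induction n arbitrary: k)
  case 0
  show ?case
  proof (cases k)
    case 0
    have "RR 0 0 = {(\<lambda>_ _. 0) :: nat \<Rightarrow> nat \<Rightarrow> 'a}"
      unfolding RR_def is_rref_def is_mat_def by (auto intro!: ext)
    then show ?thesis using 0 by simp
  next
    case (Suc k')
    have "RR k 0 = ({} :: (nat \<Rightarrow> nat \<Rightarrow> 'a) set)"
    proof -
      have "\<not> is_rref k 0 (M :: nat \<Rightarrow> nat \<Rightarrow> 'a)" for M
      proof
        assume R: "is_rref k 0 M"
        have "1 \<in> {1..k}" using Suc by simp
        then show False using R_range[OF R] by fastforce
      qed
      then show ?thesis unfolding RR_def by auto
    qed
    then show ?thesis using Suc by simp
  qed
next
  case (Suc m)
  let ?Q = "card (UNIV::'a set)"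
  let ?A = "(\<lambda>(a, N). cons a N) ` (supp_on {1..k} \<times> (RR k m :: (nat \<Rightarrow> nat \<Rightarrow> 'a) set))"
  have injA: "inj_on (\<lambda>(a, N). cons a N) (supp_on {1..k} \<times> (RR k m :: (nat \<Rightarrow> nat \<Rightarrow> 'a) set))"
    by (rule inj_onI) (auto simp: RR_def dest: cons_inj[OF R_mat R_mat])
  have fS: "finite (supp_on {1..k} :: (nat \<Rightarrow> 'a) set)" and cS: "card (supp_on {1..k} :: (nat \<Rightarrow> 'a) set) = ?Q ^ k"
    using supp_on_card[of "{1..k}", where 'a='a] by auto
  have fA: "finite ?A" using Suc.IH[of k] fS by simp
  have cA: "card ?A = ?Q ^ k * gb ?Q m k"
    using card_image[OF injA] Suc.IH[of k] cS by (simp add: card_cartesian_product)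
  show ?case
  proof (cases "k \<ge> 1")
    case False
    then have "k = 0" by simp
    then have "RR k (Suc m) = ?A" using RR_Suc[of k m] by simp
    then show ?thesis using fA cA \<open>k = 0\<close> by simp
  next
    case True
    let ?B = "cons (ek k) ` (RR (k - 1) m :: (nat \<Rightarrow> nat \<Rightarrow> 'a) set)"
    have injB: "inj_on (cons (ek k)) (RR (k - 1) m :: (nat \<Rightarrow> nat \<Rightarrow> 'a) set)"
      by (rule inj_onI) (auto simp: RR_def dest: cons_inj[OF R_mat R_mat])
    have fB: "finite ?B" using Suc.IH[of "k-1"] by simp
    have cB: "card ?B = gb ?Q m (k - 1)" using card_image[OF injB] Suc.IH[of "k-1"] by simp
    have e: "RR k (Suc m) = ?A \<union> ?B" using RR_Suc[of k m] True by simp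
    have "card (RR k (Suc m) :: (nat \<Rightarrow> nat \<Rightarrow> 'a) set) = card ?A + card ?B"
      unfolding e by (rule card_Un_disjoint[OF fA fB RR_disj[OF True]])
    also have "\<dots> = gb ?Q (Suc m) k"
      using cA cB True by (cases k) auto
    finally show ?thesis using e fA fB by simp
  qed
qed



definition vM :: "nat \<Rightarrow> (nat \<Rightarrow> nat \<Rightarrow> 'a::zero) \<Rightarrow> nat \<Rightarrow> nat" where
  "vM k M j = (if \<exists>r\<in>{1..k}. lead_pos M r = j then 1 else 0)"

definition aM :: "('a \<Rightarrow> nat) \<Rightarrow> nat \<Rightarrow> nat \<Rightarrow> (nat \<Rightarrow> nat \<Rightarrow> 'a) \<Rightarrow> nat \<Rightarrow> nat" where
  "aM enc q k M j = hv q (\<lambda>r. enc (M r j)) k"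

definition CV :: "('a::zero \<Rightarrow> nat) \<Rightarrow> nat \<Rightarrow> nat \<Rightarrow> (nat \<Rightarrow> nat \<Rightarrow> 'a) \<Rightarrow> nat \<Rightarrow> nat" where
  "CV enc q k M j = vM k M j * q ^ k + aM enc q k M j"

definition lexs :: "nat \<Rightarrow> (nat \<Rightarrow> nat) \<Rightarrow> (nat \<Rightarrow> nat) \<Rightarrow> bool" where
  "lexs n f g \<longleftrightarrow> (\<exists>j\<in>{1..n}. (\<forall>j'\<in>{1..<j}. f j' = g j') \<and> f j < g j)"

definition encv :: "('a \<Rightarrow> nat) \<Rightarrow> nat \<Rightarrow> nat \<Rightarrow> (nat \<Rightarrow> 'a) \<Rightarrow> nat" where
  "encv enc q k a = hv q (\<lambda>r. enc (a r)) k"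

lemma lexs_Suc:
  "lexs (Suc m) f g \<longleftrightarrow> f 1 < g 1 \<or> (f 1 = g 1 \<and> lexs m (\<lambda>j. f (Suc j)) (\<lambda>j. g (Suc j)))"
proof
  assume "lexs (Suc m) f g"
  then obtain j where j: "j \<in> {1..Suc m}" "\<forall>j'\<in>{1..<j}. f j' = g j'" "f j < g j" unfolding lexs_def by blast
  show "f 1 < g 1 \<or> (f 1 = g 1 \<and> lexs m (\<lambda>j. f (Suc j)) (\<lambda>j. g (Suc j)))"
  proof (cases "j = 1")
    case True then show ?thesis using j by simp
  next
    case False
    then obtain j0 where j0: "j = Suc j0" "j0 \<ge> 1" using j by (cases j) auto
    have "f 1 = g 1" using j j0 by auto
    moreover have "lexs m (\<lambda>j. f (Suc j)) (\<lambda>j. g (Suc j))"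
      unfolding lexs_def
    proof (intro bexI[of _ j0] conjI ballI)
      show "j0 \<in> {1..m}" using j j0 by auto
      show "f (Suc j0) < g (Suc j0)" using j j0 by simp
      fix j' assume "j' \<in> {1..<j0}" then show "f (Suc j') = g (Suc j')" using j j0 by auto
    qed
    ultimately show ?thesis by simp
  qed
next
  assume h: "f 1 < g 1 \<or> (f 1 = g 1 \<and> lexs m (\<lambda>j. f (Suc j)) (\<lambda>j. g (Suc j)))"
  show "lexs (Suc m) f g"
  proof (cases "f 1 < g 1")
    case True then show ?thesis unfolding lexs_def by (intro bexI[of _ 1]) auto
  next
    case False
    then have e1: "f 1 = g 1" and l: "lexs m (\<lambda>j. f (Suc j)) (\<lambda>j. g (Suc j))" using h by auto
    then obtain j where j: "j \<in> {1..m}" "\<forall>j'\<in>{1..<j}. f (Suc j') = g (Suc j')" "f (Suc j) < g (Suc j)"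
      unfolding lexs_def by blast
    show ?thesis unfolding lexs_def
    proof (intro bexI[of _ "Suc j"] conjI ballI)
      show "Suc j \<in> {1..Suc m}" using j by auto
      show "f (Suc j) < g (Suc j)" using j by simp
      fix j' assume j': "j' \<in> {1..<Suc j}"
      show "f j' = g j'"
      proof (cases "j' = 1")
        case True then show ?thesis using e1 by simp
      next
        case False
        then obtain j0 where "j' = Suc j0" "j0 \<in> {1..<j}" using j' by (cases j') auto
        then show ?thesis using j by simp
      qed
    qed
  qed
qed

lemma lexs_cong:
  assumes "\<And>j. j \<in> {1..n} \<Longrightarrow> f j = f' j" "\<And>j. j \<in> {1..n} \<Longrightarrow> g j = g' j"
  shows "lexs n f g = lexs n f' g'"
proof -
  have "\<And>j. j \<in> {1..n} \<Longrightarrow> ((\<forall>j'\<in>{1..<j}. f j' = g j') \<and> f j < g j) = ((\<forall>j'\<in>{1..<j}. f' j' = g' j') \<and> f' j < g' j)"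
  proof -
    fix j assume j: "j \<in> {1..n}"
    have "\<forall>j'\<in>{1..<j}. f j' = f' j' \<and> g j' = g' j'" using assms j by auto
    then show "((\<forall>j'\<in>{1..<j}. f j' = g j') \<and> f j < g j) = ((\<forall>j'\<in>{1..<j}. f' j' = g' j') \<and> f' j < g' j)"
      using assms j by auto
  qed
  then show ?thesis unfolding lexs_def by blast
qed

lemma lexs_mult:
  assumes "(q::nat) > 0"
  shows "lexs n (\<lambda>j. q * f j) (\<lambda>j. q * g j) = lexs n f g"
  unfolding lexs_def using assms by simp

lemma hv_zero: "hv q (\<lambda>_. 0) k = 0" by (induction k) auto

locale encl =
  fixes enc :: "'a::{field,finite} \<Rightarrow> nat" and q :: nat
  assumes qd: "card (UNIV :: 'a set) = q"
    and encb: "bij_betw enc UNIV {0..<q}"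
    and enc0: "enc 0 = 0" and enc1: "enc 1 = 1"

context encl
begin

lemma q2: "q \<ge> 2" using card_field_ge2[where 'a='a] qd by simp

lemma enc_lt: "enc x < q" using encb unfolding bij_betw_def by auto

lemma enc_inj: "enc x = enc y \<Longrightarrow> x = y" using encb unfolding bij_betw_def inj_on_def by blast

lemma encv_lt: "encv enc q k a < q ^ k"
  unfolding encv_def using hv_bound[of q k] q2 enc_lt by simp

lemma encv_bij: "bij_betw (encv enc q k) (supp_on {1..k}) {0..<q ^ k}"
proof -
  have inj: "inj_on (encv enc q k) (supp_on {1..k})"
  proof (rule inj_onI)
    fix a b assume a: "a \<in> supp_on {1..k}" and b: "b \<in> supp_on {1..k}" and e: "encv enc q k a = encv enc q k b"
    show "a = b"
    proof
      fix r show "a r = b r"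
      proof (cases "r \<in> {1..k}")
        case True
        have "enc (a r) = enc (b r)"
          using hv_inj[of q k "\<lambda>r. enc (a r)" "\<lambda>r. enc (b r)" r] e True q2 enc_lt unfolding encv_def by simp
        then show ?thesis by (rule enc_inj)
      next
        case False
        then have "a r = 0" "b r = 0" using a b unfolding supp_on_def by auto
        then show ?thesis by simp
      qed
    qed
  qed
  have sub: "encv enc q k ` supp_on {1..k} \<subseteq> {0..<q ^ k}" using encv_lt by auto
  have c: "card (supp_on {1..k} :: (nat \<Rightarrow> 'a) set) = q ^ k"
    using supp_on_card[of "{1..k}", where 'a='a] qd by simp
  have "encv enc q k ` supp_on {1..k} = {0..<q ^ k}"
    by (rule card_subset_eq[OF _ sub]) (use card_image[OF inj] c in simp_all)
  then show ?thesis using inj unfolding bij_betw_def by simp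
qed

lemma encv_card_less:
  assumes "v \<le> q ^ k"
  shows "card {a \<in> supp_on {1..k}. encv enc q k a < v} = v"
proof -
  let ?T = "{a \<in> supp_on {1..k}. encv enc q k a < v}"
  have inj: "inj_on (encv enc q k) ?T" using encv_bij unfolding bij_betw_def inj_on_def by blast
  have "encv enc q k ` ?T = {0..<v}"
  proof
    show "encv enc q k ` ?T \<subseteq> {0..<v}" by auto
    show "{0..<v} \<subseteq> encv enc q k ` ?T"
    proof
      fix x assume x: "x \<in> {0..<v}"
      then have "x \<in> {0..<q^k}" using assms by auto
      then obtain a where a: "a \<in> supp_on {1..k}" "x = encv enc q k a"
        using encv_bij unfolding bij_betw_def by blast
      then have "a \<in> ?T" using x by simp
      then show "x \<in> encv enc q k ` ?T" using a by blast
    qed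
  qed
  then show ?thesis using card_image[OF inj] by simp
qed

lemma vM_cons_1:
  assumes "is_rref k m N" "a \<in> supp_on {1..k}"
  shows "vM k (cons a N) 1 = 0"
proof -
  have "\<forall>r\<in>{1..k}. lead_pos (cons a N) r \<noteq> 1"
  proof
    fix r assume r: "r \<in> {1..k}"
    show "lead_pos (cons a N) r \<noteq> 1" using cons_rref(2)[OF assms r] R_range[OF assms(1) r] by simp
  qed
  then show ?thesis unfolding vM_def by auto
qed

lemma vM_cons_Suc:
  assumes "is_rref k m N" "a \<in> supp_on {1..k}"
  shows "vM k (cons a N) (Suc j) = vM k N j"
  unfolding vM_def using cons_rref(2)[OF assms] by auto

lemma aM_cons_1: "aM enc q k (cons a N) 1 = encv enc q k a"
  unfolding aM_def encv_def by simp

lemma aM_cons_Suc: "j \<ge> 1 \<Longrightarrow> aM enc q k (cons a N) (Suc j) = aM enc q k N j"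
  unfolding aM_def by simp

lemma CV_cons_1:
  assumes "is_rref k m N" "a \<in> supp_on {1..k}"
  shows "CV enc q k (cons a N) 1 = encv enc q k a"
  unfolding CV_def using vM_cons_1[OF assms] aM_cons_1 by simp

lemma CV_cons_Suc:
  assumes "is_rref k m N" "a \<in> supp_on {1..k}" "j \<ge> 1"
  shows "CV enc q k (cons a N) (Suc j) = CV enc q k N j"
  unfolding CV_def using vM_cons_Suc[OF assms(1,2)] aM_cons_Suc[OF assms(3)] by simp

lemma vM_consp_1:
  assumes "is_rref (k - 1) m N" "k \<ge> 1"
  shows "vM k (cons (ek k) N) 1 = 1"
  unfolding vM_def using consp_rref(3)[OF assms] assms(2) by auto

lemma vM_consp_Suc:
  assumes "is_rref (k - 1) m N" "k \<ge> 1" "j \<ge> 1"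
  shows "vM k (cons (ek k) N) (Suc j) = vM (k - 1) N j"
proof -
  have "(\<exists>r\<in>{1..k}. lead_pos (cons (ek k) N) r = Suc j) = (\<exists>r\<in>{1..k-1}. lead_pos N r = j)"
  proof
    assume "\<exists>r\<in>{1..k}. lead_pos (cons (ek k) N) r = Suc j"
    then obtain r where r: "r \<in> {1..k}" "lead_pos (cons (ek k) N) r = Suc j" by blast
    have "r \<noteq> k" using r consp_rref(3)[OF assms(1,2)] assms(3) by auto
    then have "r \<in> {1..k-1}" using r by auto
    then show "\<exists>r\<in>{1..k-1}. lead_pos N r = j" using r consp_rref(2)[OF assms(1,2)] by auto
  next
    assume "\<exists>r\<in>{1..k-1}. lead_pos N r = j"
    then obtain r where r: "r \<in> {1..k-1}" "lead_pos N r = j" by blast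
    then have "r \<in> {1..k}" by auto
    moreover have "lead_pos (cons (ek k) N) r = Suc j" using r consp_rref(2)[OF assms(1,2) r(1)] by simp
    ultimately show "\<exists>r\<in>{1..k}. lead_pos (cons (ek k) N) r = Suc j" by blast
  qed
  then show ?thesis unfolding vM_def by simp
qed

lemma aM_consp_1:
  assumes "k \<ge> 1"
  shows "aM enc q k (cons (ek k) N) 1 = 1"
proof -
  obtain k' where k: "k = Suc k'" using assms by (cases k) auto
  have "hv q (\<lambda>r. enc (ek k r)) k' = hv q (\<lambda>_. 0) k'"
    by (rule hv_cong) (auto simp: ek_def k enc0)
  then show ?thesis unfolding aM_def using k by (simp add: hv_zero ek_def enc1)
qed

lemma aM_consp_Suc:
  assumes "is_rref (k - 1) m N" "k \<ge> 1" "j \<ge> 1"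
  shows "aM enc q k (cons (ek k) N) (Suc j) = q * aM enc q (k - 1) N j"
proof -
  obtain k' where k: "k = Suc k'" using assms by (cases k) auto
  have "N k j = 0"
  proof (rule ccontr)
    assume "N k j \<noteq> 0"
    then have "k \<le> k - 1" using R_mat[OF assms(1)] unfolding is_mat_def by auto
    then show False using k by simp
  qed
  then show ?thesis unfolding aM_def using k assms(3) by (simp add: enc0)
qed

lemma CV_consp_1:
  assumes "is_rref (k - 1) m N" "k \<ge> 1"
  shows "CV enc q k (cons (ek k) N) 1 = q ^ k + 1"
  unfolding CV_def using vM_consp_1[OF assms] aM_consp_1[OF assms(2)] by simp

lemma CV_consp_Suc:
  assumes "is_rref (k - 1) m N" "k \<ge> 1" "j \<ge> 1"
  shows "CV enc q k (cons (ek k) N) (Suc j) = q * CV enc q (k - 1) N j"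
proof -
  obtain k' where k: "k = Suc k'" using assms by (cases k) auto
  show ?thesis unfolding CV_def using vM_consp_Suc[OF assms] aM_consp_Suc[OF assms] k
    by (simp add: algebra_simps)
qed

end



lemma gb_Suc_pos: "k \<ge> 1 \<Longrightarrow> gb q (Suc m) k = gb q m (k - 1) + q ^ k * gb q m k"
  by (cases k) auto

lemma alg_first_pivot:
  assumes q: "q \<ge> 2" and k: "k \<ge> 1" and i: "i \<ge> int (q ^ k * gb q m k)"
  shows "alg_state q (Suc m) k i 1 = (i - int (q ^ k * gb q m k), 1)"
    and "alg_col q (Suc m) k i 1 = (1, 1)"
proof -
  have G: "gauss_binom q m k = real (gb q m k)" using gauss_gb[OF q] by simp
  have E: "real q ^ k * real (gb q m k) = real_of_int (int (q ^ k * gb q m k))" by simp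
  have C: "real_of_int i \<ge> real q ^ k * real (gb q m k)" unfolding E using i by linarith
  have F: "\<lfloor>real q ^ k * real (gb q m k)\<rfloor> = int (q ^ k * gb q m k)" unfolding E by (rule floor_of_int)
  have k0: "k \<noteq> 0" using k by simp
  show "alg_state q (Suc m) k i 1 = (i - int (q ^ k * gb q m k), 1)"
    using C F k0 by (simp add: Let_def G)
  show "alg_col q (Suc m) k i 1 = (1, 1)"
    unfolding alg_col_def using C k0 by (simp add: Let_def G)
qed

lemma alg_first_np:
  assumes q: "q \<ge> 2" and i0: "0 \<le> i" and i: "i < int (q ^ k * gb q m k)"
  shows "alg_state q (Suc m) k i 1 = (i mod int (gb q m k), 0)"
    and "alg_col q (Suc m) k i 1 = (0, nat (i div int (gb q m k)))"
proof -
  have G: "gauss_binom q m k = real (gb q m k)" using gauss_gb[OF q] by simp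
  show "alg_state q (Suc m) k i 1 = (i mod int (gb q m k), 0)"
  proof (cases "k = 0")
    case True
    then have "i = 0" using i i0 by simp
    then show ?thesis using True by simp
  next
    case False
    have E: "real q ^ k * real (gb q m k) = real_of_int (int (q ^ k * gb q m k))" by simp
    have C: "\<not> real_of_int i \<ge> real q ^ k * real (gb q m k)" unfolding E using i by linarith
    have D: "\<lfloor>real_of_int i / real (gb q m k)\<rfloor> = i div int (gb q m k)"
      using floor_divide_of_int_eq[of i "int (gb q m k)"] by simp
    have D2: "\<lfloor>real_of_int (i div int (gb q m k)) * real (gb q m k)\<rfloor> = i div int (gb q m k) * int (gb q m k)"
      by (metis floor_of_int of_int_mult of_int_of_nat_eq)
    have "i - i div int (gb q m k) * int (gb q m k) = i mod int (gb q m k)" by (simp add: minus_div_mult_eq_mod)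
    then show ?thesis using C D D2 False by (simp add: Let_def G)
  qed
  show "alg_col q (Suc m) k i 1 = (0, nat (i div int (gb q m k)))"
  proof (cases "k = 0")
    case True
    then have "i = 0" using i i0 by simp
    then show ?thesis using True unfolding alg_col_def by simp
  next
    case False
    have E: "real q ^ k * real (gb q m k) = real_of_int (int (q ^ k * gb q m k))" by simp
    have C: "\<not> real_of_int i \<ge> real q ^ k * real (gb q m k)" unfolding E using i by linarith
    have D: "\<lfloor>real_of_int i / real (gb q m k)\<rfloor> = i div int (gb q m k)"
      using floor_divide_of_int_eq[of i "int (gb q m k)"] by simp
    show ?thesis unfolding alg_col_def using C D False by (simp add: Let_def G)
  qed
qed



context encl
begin

lemma cons_lex:
  assumes N: "is_rref k m N" and N': "is_rref k m N'" and a: "a \<in> supp_on {1..k}" and a': "a' \<in> supp_on {1..k}"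
  shows "lexs (Suc m) (CV enc q k (cons a' N')) (CV enc q k (cons a N)) \<longleftrightarrow>
         encv enc q k a' < encv enc q k a \<or> (encv enc q k a' = encv enc q k a \<and> lexs m (CV enc q k N') (CV enc q k N))"
proof -
  have "lexs m (\<lambda>j. CV enc q k (cons a' N') (Suc j)) (\<lambda>j. CV enc q k (cons a N) (Suc j)) = lexs m (CV enc q k N') (CV enc q k N)"
    by (rule lexs_cong) (auto simp: CV_cons_Suc[OF N' a'] CV_cons_Suc[OF N a])
  then show ?thesis unfolding lexs_Suc using CV_cons_1[OF N a] CV_cons_1[OF N' a'] by simp
qed

lemma consp_lex:
  assumes N: "is_rref (k - 1) m N" and N': "is_rref (k - 1) m N'" and k: "k \<ge> 1"
  shows "lexs (Suc m) (CV enc q k (cons (ek k) N')) (CV enc q k (cons (ek k) N)) \<longleftrightarrow>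
         lexs m (CV enc q (k - 1) N') (CV enc q (k - 1) N)"
proof -
  have "lexs m (\<lambda>j. CV enc q k (cons (ek k) N') (Suc j)) (\<lambda>j. CV enc q k (cons (ek k) N) (Suc j))
      = lexs m (\<lambda>j. q * CV enc q (k - 1) N' j) (\<lambda>j. q * CV enc q (k - 1) N j)"
    by (rule lexs_cong) (auto simp: CV_consp_Suc[OF N' k] CV_consp_Suc[OF N k])
  also have "\<dots> = lexs m (CV enc q (k - 1) N') (CV enc q (k - 1) N)"
    using lexs_mult[of q] q2 by simp
  finally show ?thesis unfolding lexs_Suc using CV_consp_1[OF N k] CV_consp_1[OF N' k] by simp
qed

lemma consp_cons_lex:
  assumes N': "is_rref (k - 1) m N'" and k: "k \<ge> 1" and N: "is_rref k m N" and a: "a \<in> supp_on {1..k}"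
  shows "\<not> lexs (Suc m) (CV enc q k (cons (ek k) N')) (CV enc q k (cons a N))"
    "lexs (Suc m) (CV enc q k (cons a N)) (CV enc q k (cons (ek k) N'))"
proof -
  have "CV enc q k (cons a N) 1 < CV enc q k (cons (ek k) N') 1"
    using CV_cons_1[OF N a] CV_consp_1[OF N' k] encv_lt[of k a] by simp
  then show "\<not> lexs (Suc m) (CV enc q k (cons (ek k) N')) (CV enc q k (cons a N))"
    "lexs (Suc m) (CV enc q k (cons a N)) (CV enc q k (cons (ek k) N'))"
    unfolding lexs_Suc by auto
qed

lemma card_consA:
  assumes "T \<subseteq> supp_on {1..k}"
  shows "finite ((\<lambda>(a, N). cons a N) ` (T \<times> (RR k m :: (nat \<Rightarrow> nat \<Rightarrow> 'a) set))) \<and>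
         card ((\<lambda>(a, N). cons a N) ` (T \<times> (RR k m :: (nat \<Rightarrow> nat \<Rightarrow> 'a) set))) = card T * gb q m k"
proof -
  have fS: "finite (supp_on {1..k} :: (nat \<Rightarrow> 'a) set)" using supp_on_card[of "{1..k}", where 'a='a] by auto
  have fT: "finite T" using finite_subset[OF assms fS] .
  have injA: "inj_on (\<lambda>(a, N). cons a N) (T \<times> (RR k m :: (nat \<Rightarrow> nat \<Rightarrow> 'a) set))"
    by (rule inj_onI) (auto simp: RR_def dest: cons_inj[OF R_mat R_mat])
  have R: "finite (RR k m :: (nat \<Rightarrow> nat \<Rightarrow> 'a) set)" "card (RR k m :: (nat \<Rightarrow> nat \<Rightarrow> 'a) set) = gb q m k"
    using RR_card[where 'a='a, of k m] qd by auto
  show ?thesis using card_image[OF injA] R fT by (simp add: card_cartesian_product)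
qed

lemma RR_finite: "finite (RR k m :: (nat \<Rightarrow> nat \<Rightarrow> 'a) set)"
  using RR_card[where 'a='a, of k m] by auto

end



context encl
begin

lemma main:
  "k \<le> n \<Longrightarrow> 0 \<le> i \<Longrightarrow> i < int (gb q n k) \<Longrightarrow>
   \<exists>M\<in>(RR k n :: (nat \<Rightarrow> nat \<Rightarrow> 'a) set).
      (\<forall>j\<in>{1..n}. alg_col q n k i j = (vM k M j, aM enc q k M j)) \<and>
      int (card {M'\<in>RR k n. lexs n (CV enc q k M') (CV enc q k M)}) = i"
proof (induction n arbitrary: k i)
  case 0
  then have k0: "k = 0" and i0: "i = 0" by auto
  let ?Z = "(\<lambda>_ _. 0) :: nat \<Rightarrow> nat \<Rightarrow> 'a"
  have Z: "?Z \<in> RR 0 0" unfolding RR_def is_rref_def is_mat_def by simp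
  have e: "{M'\<in>RR 0 0. lexs 0 (CV enc q 0 M') (CV enc q 0 ?Z)} = {}" unfolding lexs_def by simp
  show ?case unfolding k0 i0
  proof (intro bexI[of _ ?Z] conjI)
    show "int (card {M'\<in>RR 0 0. lexs 0 (CV enc q 0 M') (CV enc q 0 ?Z)}) = 0"
      by (simp only: e card.empty of_nat_0)
  qed (use Z in simp_all)
next
  case (Suc m)
  note IH = Suc.IH
  have kle: "k \<le> Suc m" and i0: "0 \<le> i" and ilt: "i < int (gb q (Suc m) k)" using Suc.prems by auto
  define g where "g = gb q m k"
  define S where "S = (supp_on {1..k} :: (nat \<Rightarrow> 'a) set)"
  define A where "A = (\<lambda>(a, N). cons a N) ` (S \<times> (RR k m :: (nat \<Rightarrow> nat \<Rightarrow> 'a) set))"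
  show ?case
  proof (cases "k \<ge> 1 \<and> int (q ^ k * g) \<le> i")
    case True
    then have k: "k \<ge> 1" and ige: "int (q ^ k * g) \<le> i" by auto
    define i1 where "i1 = i - int (q ^ k * g)"
    have st1: "alg_state q (Suc m) k i 1 = (i1, 1)" and col1: "alg_col q (Suc m) k i 1 = (1, 1)"
      using alg_first_pivot[OF q2 k, of m i] ige unfolding i1_def g_def by auto
    have gbs: "gb q (Suc m) k = gb q m (k - 1) + q ^ k * g" unfolding g_def using gb_Suc_pos[OF k] .
    have i1b: "0 \<le> i1" "i1 < int (gb q m (k - 1))" using ige ilt gbs unfolding i1_def by auto
    have km: "k - 1 \<le> m" using kle by simp
    obtain N where NR: "N \<in> (RR (k - 1) m :: (nat \<Rightarrow> nat \<Rightarrow> 'a) set)"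
      and colN: "\<forall>j\<in>{1..m}. alg_col q m (k - 1) i1 j = (vM (k - 1) N j, aM enc q (k - 1) N j)"
      and rkN: "int (card {M'\<in>RR (k - 1) m. lexs m (CV enc q (k - 1) M') (CV enc q (k - 1) N)}) = i1"
      using IH[OF km i1b] by blast
    have N: "is_rref (k - 1) m N" using NR unfolding RR_def by simp
    define M where "M = cons (ek k) N"
    have MR: "M \<in> (RR k (Suc m) :: (nat \<Rightarrow> nat \<Rightarrow> 'a) set)" unfolding M_def RR_def using consp_rref(1)[OF N k] by simp
    have cols: "\<forall>j\<in>{1..Suc m}. alg_col q (Suc m) k i j = (vM k M j, aM enc q k M j)"
    proof
      fix j assume j: "j \<in> {1..Suc m}"
      show "alg_col q (Suc m) k i j = (vM k M j, aM enc q k M j)"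
      proof (cases "j = 1")
        case True then show ?thesis using col1 vM_consp_1[OF N k] aM_consp_1[OF k] unfolding M_def by simp
      next
        case False
        then obtain j' where j': "j = Suc j'" "j' \<in> {1..m}" using j by (cases j) auto
        have "alg_col q (Suc m) k i (Suc j') = (fst (alg_col q m (k - 1) i1 j'), snd (alg_col q m (k - 1) i1 j') * q ^ 1)"
          using alg_col_shift[OF st1, of j'] j' by simp
        also have "\<dots> = (vM (k - 1) N j', aM enc q (k - 1) N j' * q)" using colN j' by simp
        also have "\<dots> = (vM k M (Suc j'), aM enc q k M (Suc j'))"
          unfolding M_def using vM_consp_Suc[OF N k] aM_consp_Suc[OF N k] j' by simp
        finally show ?thesis using j' by simp
      qed
    qed
    define SN where "SN = {M'\<in>RR (k - 1) m. lexs m (CV enc q (k - 1) M') (CV enc q (k - 1) N)}"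
    have seteq: "{M'\<in>RR k (Suc m). lexs (Suc m) (CV enc q k M') (CV enc q k M)} = A \<union> cons (ek k) ` SN"
    proof
      show "{M'\<in>RR k (Suc m). lexs (Suc m) (CV enc q k M') (CV enc q k M)} \<subseteq> A \<union> cons (ek k) ` SN"
      proof
        fix M' assume "M' \<in> {M'\<in>RR k (Suc m). lexs (Suc m) (CV enc q k M') (CV enc q k M)}"
        then have M'R: "M' \<in> RR k (Suc m)" and lx: "lexs (Suc m) (CV enc q k M') (CV enc q k M)" by auto
        show "M' \<in> A \<union> cons (ek k) ` SN"
        proof (cases "M' \<in> A")
          case False
          then obtain N' where N'R: "N' \<in> RR (k - 1) m" and e: "M' = cons (ek k) N'"
            using M'R RR_Suc[of k m] k unfolding A_def S_def by auto
          have N': "is_rref (k - 1) m N'" using N'R unfolding RR_def by simp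
          have "N' \<in> SN" using lx consp_lex[OF N N' k] N'R unfolding e M_def SN_def by simp
          then show ?thesis using e by blast
        qed simp
      qed
    next
      show "A \<union> cons (ek k) ` SN \<subseteq> {M'\<in>RR k (Suc m). lexs (Suc m) (CV enc q k M') (CV enc q k M)}"
      proof
        fix M' assume h: "M' \<in> A \<union> cons (ek k) ` SN"
        show "M' \<in> {M'\<in>RR k (Suc m). lexs (Suc m) (CV enc q k M') (CV enc q k M)}"
        proof (cases "M' \<in> A")
          case True
          then obtain a' N' where a': "a' \<in> S" and N'R: "N' \<in> RR k m" and e: "M' = cons a' N'"
            unfolding A_def by auto
          have N': "is_rref k m N'" using N'R unfolding RR_def by simp
          have "M' \<in> RR k (Suc m)" using RR_Suc[of k m] True unfolding A_def S_def by auto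
          moreover have "lexs (Suc m) (CV enc q k M') (CV enc q k M)"
            using consp_cons_lex(2)[OF N k N'] a' unfolding e M_def S_def by simp
          ultimately show ?thesis by simp
        next
          case False
          then obtain N' where N'S: "N' \<in> SN" and e: "M' = cons (ek k) N'" using h by auto
          have N'R: "N' \<in> RR (k - 1) m" using N'S unfolding SN_def by simp
          have N': "is_rref (k - 1) m N'" using N'R unfolding RR_def by simp
          have "M' \<in> RR k (Suc m)" using RR_Suc[of k m] k N'R e by auto
          moreover have "lexs (Suc m) (CV enc q k M') (CV enc q k M)"
            using consp_lex[OF N N' k] N'S unfolding e M_def SN_def by simp
          ultimately show ?thesis by simp
        qed
      qed
    qed
    have cS: "card S = q ^ k" using supp_on_card[of "{1..k}", where 'a='a] qd unfolding S_def by simp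
    have cA: "finite A" "card A = q ^ k * g" using card_consA[of S k m] cS unfolding A_def g_def by (auto simp: S_def)
    have injB: "inj_on (cons (ek k)) SN"
      by (rule inj_onI) (auto simp: SN_def RR_def dest: cons_inj[OF R_mat R_mat])
    have fSN: "finite SN" unfolding SN_def using RR_finite[of "k-1" m] by simp
    have disj: "A \<inter> cons (ek k) ` SN = {}"
      using RR_disj[OF k, of m, where 'a='a] unfolding A_def S_def SN_def by blast
    have "card (A \<union> cons (ek k) ` SN) = card A + card SN"
      using card_Un_disjoint[OF cA(1) _ disj] fSN card_image[OF injB] by simp
    then have "int (card {M'\<in>RR k (Suc m). lexs (Suc m) (CV enc q k M') (CV enc q k M)}) = int (q ^ k * g) + i1"
      using seteq cA rkN unfolding SN_def by simp
    also have "\<dots> = i" unfolding i1_def by simp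
    finally show ?thesis using MR cols by blast
  next
    case False
    have ilt2: "i < int (q ^ k * g)"
    proof (cases "k = 0")
      case True then show ?thesis using ilt unfolding g_def by simp
    next
      case False
      then show ?thesis using \<open>\<not> (k \<ge> 1 \<and> int (q ^ k * g) \<le> i)\<close> by simp
    qed
    have gpos: "g > 0" using ilt2 i0 by (cases "g = 0") auto
    have km: "k \<le> m"
    proof (rule ccontr)
      assume "\<not> k \<le> m"
      then have "g = 0" unfolding g_def using gb_gt[of m k] by simp
      then show False using gpos by simp
    qed
    define val where "val = i div int g"
    define i1 where "i1 = i mod int g"
    have st1: "alg_state q (Suc m) k i 1 = (i1, 0)" and col1: "alg_col q (Suc m) k i 1 = (0, nat val)"
      using alg_first_np[OF q2 i0, of k m] ilt2 unfolding i1_def val_def g_def by auto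
    have idec: "i = val * int g + i1" unfolding val_def i1_def by simp
    have i1b: "0 \<le> i1" "i1 < int g" unfolding i1_def using gpos by auto
    have val0: "0 \<le> val" unfolding val_def using i0 gpos by (simp add: pos_imp_zdiv_nonneg_iff)
    have vallt: "val < int (q ^ k)"
    proof -
      have "val * int g \<le> i" using idec i1b by simp
      then have "val * int g < int (q ^ k) * int g" using ilt2 by simp
      then show ?thesis using gpos by (simp add: mult_less_cancel_right)
    qed
    obtain N where NR: "N \<in> (RR k m :: (nat \<Rightarrow> nat \<Rightarrow> 'a) set)"
      and colN: "\<forall>j\<in>{1..m}. alg_col q m k i1 j = (vM k N j, aM enc q k N j)"
      and rkN: "int (card {M'\<in>RR k m. lexs m (CV enc q k M') (CV enc q k N)}) = i1"
      using IH[OF km i1b(1)] i1b(2) unfolding g_def by blast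
    have N: "is_rref k m N" using NR unfolding RR_def by simp
    have "nat val < q ^ k" using vallt val0 by (metis nat_less_iff of_nat_power)
    then have "nat val \<in> {0..<q ^ k}" by simp
    then obtain a where aS: "a \<in> S" and av: "encv enc q k a = nat val"
      using encv_bij unfolding bij_betw_def S_def by (metis imageE)
    have a: "a \<in> supp_on {1..k}" using aS unfolding S_def .
    define M where "M = cons a N"
    have MR: "M \<in> (RR k (Suc m) :: (nat \<Rightarrow> nat \<Rightarrow> 'a) set)" unfolding M_def RR_def using cons_rref(1)[OF N a] by simp
    have cols: "\<forall>j\<in>{1..Suc m}. alg_col q (Suc m) k i j = (vM k M j, aM enc q k M j)"
    proof
      fix j assume j: "j \<in> {1..Suc m}"
      show "alg_col q (Suc m) k i j = (vM k M j, aM enc q k M j)"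
      proof (cases "j = 1")
        case True then show ?thesis using col1 vM_cons_1[OF N a] aM_cons_1 av unfolding M_def by simp
      next
        case False
        then obtain j' where j': "j = Suc j'" "j' \<in> {1..m}" using j by (cases j) auto
        have "alg_col q (Suc m) k i (Suc j') = (fst (alg_col q m (k - 0) i1 j'), snd (alg_col q m (k - 0) i1 j') * q ^ 0)"
          using alg_col_shift[OF st1, of j'] j' by simp
        also have "\<dots> = (vM k N j', aM enc q k N j')" using colN j' by simp
        also have "\<dots> = (vM k M (Suc j'), aM enc q k M (Suc j'))"
          unfolding M_def using vM_cons_Suc[OF N a] aM_cons_Suc j' by simp
        finally show ?thesis using j' by simp
      qed
    qed
    define T where "T = {a' \<in> S. encv enc q k a' < encv enc q k a}"
    define SN where "SN = {M'\<in>RR k m. lexs m (CV enc q k M') (CV enc q k N)}"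
    define A' where "A' = (\<lambda>(a, N). cons a N) ` (T \<times> (RR k m :: (nat \<Rightarrow> nat \<Rightarrow> 'a) set))"
    have seteq: "{M'\<in>RR k (Suc m). lexs (Suc m) (CV enc q k M') (CV enc q k M)} = A' \<union> cons a ` SN"
    proof
      show "{M'\<in>RR k (Suc m). lexs (Suc m) (CV enc q k M') (CV enc q k M)} \<subseteq> A' \<union> cons a ` SN"
      proof
        fix M' assume "M' \<in> {M'\<in>RR k (Suc m). lexs (Suc m) (CV enc q k M') (CV enc q k M)}"
        then have M'R: "M' \<in> RR k (Suc m)" and lx: "lexs (Suc m) (CV enc q k M') (CV enc q k M)" by auto
        show "M' \<in> A' \<union> cons a ` SN"
        proof (cases "M' \<in> A")
          case True
          then obtain a' N' where a': "a' \<in> S" and N'R: "N' \<in> RR k m" and e: "M' = cons a' N'"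
            unfolding A_def by auto
          have N': "is_rref k m N'" using N'R unfolding RR_def by simp
          have a'': "a' \<in> supp_on {1..k}" using a' unfolding S_def .
          have c: "encv enc q k a' < encv enc q k a \<or> (encv enc q k a' = encv enc q k a \<and> lexs m (CV enc q k N') (CV enc q k N))"
            using lx cons_lex[OF N N' a a''] unfolding e M_def by simp
          show ?thesis
          proof (cases "encv enc q k a' < encv enc q k a")
            case True
            then have "(a', N') \<in> T \<times> RR k m" using a' N'R unfolding T_def by simp
            then show ?thesis unfolding A'_def e by force
          next
            case False
            then have ee: "encv enc q k a' = encv enc q k a" and l: "lexs m (CV enc q k N') (CV enc q k N)" using c by auto
            have "a' = a" using encv_bij a' aS ee unfolding bij_betw_def inj_on_def S_def by blast
            then show ?thesis using l N'R unfolding e SN_def by blast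
          qed
        next
          case False
          then obtain N' where N'R: "N' \<in> RR (k - 1) m" and e: "M' = cons (ek k) N'" and k: "k \<ge> 1"
            using M'R RR_Suc[of k m] unfolding A_def S_def by (auto split: if_splits)
          have N': "is_rref (k - 1) m N'" using N'R unfolding RR_def by simp
          have False using consp_cons_lex(1)[OF N' k N a] lx unfolding e M_def by simp
          then show ?thesis by simp
        qed
      qed
    next
      show "A' \<union> cons a ` SN \<subseteq> {M'\<in>RR k (Suc m). lexs (Suc m) (CV enc q k M') (CV enc q k M)}"
      proof
        fix M' assume h: "M' \<in> A' \<union> cons a ` SN"
        show "M' \<in> {M'\<in>RR k (Suc m). lexs (Suc m) (CV enc q k M') (CV enc q k M)}"
        proof (cases "M' \<in> A'")
          case True
          then obtain a' N' where a': "a' \<in> T" and N'R: "N' \<in> RR k m" and e: "M' = cons a' N'"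
            unfolding A'_def by auto
          have N': "is_rref k m N'" using N'R unfolding RR_def by simp
          have a'': "a' \<in> supp_on {1..k}" using a' unfolding T_def S_def by simp
          have "M' \<in> RR k (Suc m)" using cons_rref(1)[OF N' a''] unfolding e RR_def by simp
          moreover have "lexs (Suc m) (CV enc q k M') (CV enc q k M)"
            using cons_lex[OF N N' a a''] a' unfolding e M_def T_def by simp
          ultimately show ?thesis by simp
        next
          case False
          then obtain N' where N'S: "N' \<in> SN" and e: "M' = cons a N'" using h by auto
          have N'R: "N' \<in> RR k m" using N'S unfolding SN_def by simp
          have N': "is_rref k m N'" using N'R unfolding RR_def by simp
          have "M' \<in> RR k (Suc m)" using cons_rref(1)[OF N' a] unfolding e RR_def by simp
          moreover have "lexs (Suc m) (CV enc q k M') (CV enc q k M)"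
            using cons_lex[OF N N' a a] N'S unfolding e M_def SN_def by simp
          ultimately show ?thesis by simp
        qed
      qed
    qed
    have TS: "T \<subseteq> supp_on {1..k}" unfolding T_def S_def by auto
    have cT: "card T = nat val"
      using encv_card_less[of "encv enc q k a" k] encv_lt[of k a] av unfolding T_def S_def by simp
    have cA: "finite A'" "card A' = nat val * g" using card_consA[OF TS, of m] cT unfolding A'_def g_def by auto
    have injB: "inj_on (cons a) SN"
      by (rule inj_onI) (auto simp: SN_def RR_def dest: cons_inj[OF R_mat R_mat])
    have fSN: "finite SN" unfolding SN_def using RR_finite[of k m] by simp
    have disj: "A' \<inter> cons a ` SN = {}"
    proof (rule ccontr)
      assume "A' \<inter> cons a ` SN \<noteq> {}"
      then obtain a' N' N'' where a': "a' \<in> T" and N'R: "N' \<in> RR k m" and N''S: "N'' \<in> SN"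
        and e: "cons a' N' = cons a N''" unfolding A'_def by auto
      have "a' = a" using cons_inj[OF R_mat R_mat e] N'R N''S unfolding RR_def SN_def by auto
      then show False using a' unfolding T_def by simp
    qed
    have "card (A' \<union> cons a ` SN) = card A' + card SN"
      using card_Un_disjoint[OF cA(1) _ disj] fSN card_image[OF injB] by simp
    then have "int (card {M'\<in>RR k (Suc m). lexs (Suc m) (CV enc q k M') (CV enc q k M)}) = int (nat val * g) + i1"
      using seteq cA rkN unfolding SN_def by simp
    also have "\<dots> = i" using idec val0 by simp
    finally show ?thesis using MR cols by blast
  qed
qed

end



lemma RE_rref:
  fixes M :: "nat \<Rightarrow> nat \<Rightarrow> 'a::field"
  assumes R: "is_rref k n M"
  shows "RE k n (rowspan k M) = M"
  unfolding RE_def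
proof (rule the_equality)
  show "is_rref k n M \<and> rowspan k M = rowspan k M" using R by simp
  fix M' assume "is_rref k n M' \<and> rowspan k M' = rowspan k M"
  then show "M' = M" using rref_unique[of k n M' M] R by blast
qed

lemma grass_rowspan:
  fixes M :: "nat \<Rightarrow> nat \<Rightarrow> 'a::field"
  assumes R: "is_rref k n M"
  shows "rowspan k M \<in> grassmannian n k"
  unfolding grassmannian_def using R_mat[OF R] R_indep[OF R] by blast

lemma grass_RE:
  fixes Y :: "(nat \<Rightarrow> 'a::{field,finite}) set"
  assumes "Y \<in> grassmannian n k"
  shows "is_rref k n (RE k n Y) \<and> rowspan k (RE k n Y) = Y"
proof -
  obtain M where M: "is_mat k n M" "rows_indep k M" "Y = rowspan k M"
    using assms unfolding grassmannian_def by blast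
  obtain M' where M': "is_rref k n M'" "rowspan k M' = Y" using rref_exists[OF M(1,2)] M(3) by blast
  have "RE k n Y = M'" using RE_rref[OF M'(1)] M'(2) by simp
  then show ?thesis using M' by simp
qed

context encl
begin

lemma EXT_lt: "EXT enc k n Y t j < q"
  unfolding EXT_def vX_def using enc_lt q2 by auto

lemma EXT_col_val:
  assumes j: "j \<in> {1..n}"
  shows "col_val q k (EXT enc k n Y) j = CV enc q k (RE k n Y) j"
proof -
  have h: "hv q (\<lambda>t. EXT enc k n Y t j) k = hv q (\<lambda>r. enc (RE k n Y r j)) k"
    by (rule hv_cong) (use j in \<open>simp add: EXT_def\<close>)
  show ?thesis unfolding col_val_hv CV_def aM_def h using j by (simp add: EXT_def vX_def vM_def)
qed

lemma EXT_col_eq: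
  assumes j: "j \<in> {1..n}"
  shows "(\<forall>t\<in>{0..k}. EXT enc k n Y t j = EXT enc k n Z t j) \<longleftrightarrow>
         col_val q k (EXT enc k n Y) j = col_val q k (EXT enc k n Z) j"
proof
  assume "\<forall>t\<in>{0..k}. EXT enc k n Y t j = EXT enc k n Z t j"
  then show "col_val q k (EXT enc k n Y) j = col_val q k (EXT enc k n Z) j"
    unfolding col_val_def by (intro sum.cong) auto
next
  assume e: "col_val q k (EXT enc k n Y) j = col_val q k (EXT enc k n Z) j"
  have b: "hv q (\<lambda>t. EXT enc k n Y t j) k < q ^ k" "hv q (\<lambda>t. EXT enc k n Z t j) k < q ^ k"
    using hv_bound[of q k] q2 EXT_lt by auto
  have d: "EXT enc k n Y 0 j = EXT enc k n Z 0 j \<and> hv q (\<lambda>t. EXT enc k n Y t j) k = hv q (\<lambda>t. EXT enc k n Z t j) k"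
    using two_digit_inj[OF _ b] e q2 unfolding col_val_hv by simp
  show "\<forall>t\<in>{0..k}. EXT enc k n Y t j = EXT enc k n Z t j"
  proof
    fix t assume t: "t \<in> {0..k}"
    show "EXT enc k n Y t j = EXT enc k n Z t j"
    proof (cases "t = 0")
      case True then show ?thesis using d by simp
    next
      case False
      then have "t \<in> {1..k}" using t by auto
      then show ?thesis using hv_inj[of q k "\<lambda>t. EXT enc k n Y t j" "\<lambda>t. EXT enc k n Z t j" t] d q2 EXT_lt by simp
    qed
  qed
qed

lemma ext_less_iff:
  "ext_less q enc n k Y Z \<longleftrightarrow> lexs n (CV enc q k (RE k n Y)) (CV enc q k (RE k n Z))"
proof -
  have "ext_less q enc n k Y Z \<longleftrightarrow> lexs n (col_val q k (EXT enc k n Y)) (col_val q k (EXT enc k n Z))"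
    unfolding ext_less_def lexs_def
  proof (intro bex_cong refl)
    fix i assume i: "i \<in> {1..n}"
    have jj: "\<And>j. j \<in> {1..<i} \<Longrightarrow> j \<in> {1..n}" using i by auto
    have A: "(\<forall>j\<in>{1..<i}. \<forall>t\<in>{0..k}. EXT enc k n Y t j = EXT enc k n Z t j) =
             (\<forall>j\<in>{1..<i}. col_val q k (EXT enc k n Y) j = col_val q k (EXT enc k n Z) j)"
      using EXT_col_eq[OF jj] by blast
    have B: "col_val q k (EXT enc k n Y) i < col_val q k (EXT enc k n Z) i \<Longrightarrow> (\<exists>t\<in>{0..k}. EXT enc k n Y t i \<noteq> EXT enc k n Z t i)"
    proof -
      assume lt: "col_val q k (EXT enc k n Y) i < col_val q k (EXT enc k n Z) i"
      show "\<exists>t\<in>{0..k}. EXT enc k n Y t i \<noteq> EXT enc k n Z t i"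
      proof (rule ccontr)
        assume "\<not> (\<exists>t\<in>{0..k}. EXT enc k n Y t i \<noteq> EXT enc k n Z t i)"
        then have "\<forall>t\<in>{0..k}. EXT enc k n Y t i = EXT enc k n Z t i" by blast
        then have "col_val q k (EXT enc k n Y) i = col_val q k (EXT enc k n Z) i"
          using EXT_col_eq[OF i, where Y=Y and Z=Z and k=k] by blast
        then show False using lt by simp
      qed
    qed
    show "((\<forall>j\<in>{1..<i}. \<forall>t\<in>{0..k}. EXT enc k n Y t j = EXT enc k n Z t j) \<and>
          (\<exists>t\<in>{0..k}. EXT enc k n Y t i \<noteq> EXT enc k n Z t i) \<and>
          col_val q k (EXT enc k n Y) i < col_val q k (EXT enc k n Z) i) =
         ((\<forall>j'\<in>{1..<i}. col_val q k (EXT enc k n Y) j' = col_val q k (EXT enc k n Z) j') \<and>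
          col_val q k (EXT enc k n Y) i < col_val q k (EXT enc k n Z) i)"
      using A B by blast
  qed
  also have "\<dots> \<longleftrightarrow> lexs n (CV enc q k (RE k n Y)) (CV enc q k (RE k n Z))"
    by (rule lexs_cong) (simp_all add: EXT_col_val)
  finally show ?thesis .
qed

end

theorem theorem4:
  fixes enc :: "'a::{field,finite} \<Rightarrow> nat"
    and q n k :: nat and i :: int
  assumes "prime_power q"
    and "card (UNIV :: 'a set) = q"
    and "bij_betw enc UNIV {0..<q}"
    and "enc 0 = 0" and "enc 1 = 1"
    and "k \<le> n"
    and "0 \<le> i" and "real_of_int i < gauss_binom q n k"
  shows "\<exists>X \<in> grassmannian n k.
           EXT enc k n X = alg_out q n k i \<and> int (I_EXT q enc n k X) = i"
proof -
  interpret E: encl enc q using assms(2-5) by unfold_locales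
  have q2: "q \<ge> 2" by (rule E.q2)
  have ilt: "i < int (gb q n k)" using assms(8) gauss_gb[OF q2] by simp
  obtain M where MR: "M \<in> (RR k n :: (nat \<Rightarrow> nat \<Rightarrow> 'a) set)"
    and cols: "\<forall>j\<in>{1..n}. alg_col q n k i j = (vM k M j, aM enc q k M j)"
    and rk: "int (card {M'\<in>RR k n. lexs n (CV enc q k M') (CV enc q k M)}) = i"
    using E.main[OF assms(6,7) ilt] by blast
  have R: "is_rref k n M" using MR unfolding RR_def by simp
  define X where "X = rowspan k M"
  have XG: "X \<in> grassmannian n k" unfolding X_def by (rule grass_rowspan[OF R])
  have REX: "RE k n X = M" unfolding X_def by (rule RE_rref[OF R])
  have ext: "EXT enc k n X = alg_out q n k i"
  proof (intro ext)
    fix r c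
    show "EXT enc k n X r c = alg_out q n k i r c"
    proof (cases "c \<in> {1..n}")
      case False then show ?thesis unfolding EXT_def alg_out_def by (simp only: if_False)
    next
      case True
      have col: "alg_col q n k i c = (vM k M c, aM enc q k M c)" using cols True by blast
      show ?thesis
      proof (cases "r = 0")
        case True then show ?thesis using \<open>c \<in> {1..n}\<close> col unfolding EXT_def alg_out_def REX
          by (simp add: vX_def vM_def REX)
      next
        case False
        show ?thesis
        proof (cases "r \<le> k")
          case True
          then have r: "r \<in> {1..k}" using False by simp
          have "aM enc q k M c div q ^ (k - r) mod q = enc (M r c)"
            unfolding aM_def using hv_digit[of q k "\<lambda>r. enc (M r c)" r] r q2 E.enc_lt by simp
          then show ?thesis using \<open>c \<in> {1..n}\<close> col False True unfolding EXT_def alg_out_def REX by simp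
        next
          case False
          then show ?thesis using \<open>r \<noteq> 0\<close> \<open>c \<in> {1..n}\<close> unfolding EXT_def alg_out_def by simp
        qed
      qed
    qed
  qed
  have IE: "I_EXT q enc n k X = card {M'\<in>RR k n. lexs n (CV enc q k M') (CV enc q k M)}"
  proof -
    let ?L = "{Y \<in> grassmannian n k. ext_less q enc n k Y X}"
    let ?R = "{M'\<in>(RR k n :: (nat \<Rightarrow> nat \<Rightarrow> 'a) set). lexs n (CV enc q k M') (CV enc q k M)}"
    have "bij_betw (RE k n) ?L ?R"
    proof (rule bij_betw_byWitness[where f'="rowspan k"])
      show "\<forall>a\<in>?L. rowspan k (RE k n a) = a" using grass_RE by blast
      show "\<forall>a'\<in>?R. RE k n (rowspan k a') = a'" using RE_rref unfolding RR_def by blast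
      show "RE k n ` ?L \<subseteq> ?R"
      proof
        fix M' assume "M' \<in> RE k n ` ?L"
        then obtain Y where Y: "Y \<in> grassmannian n k" "ext_less q enc n k Y X" "M' = RE k n Y" by blast
        have "is_rref k n M'" using grass_RE[OF Y(1)] Y(3) by simp
        moreover have "lexs n (CV enc q k M') (CV enc q k M)" using Y(2,3) E.ext_less_iff REX by simp
        ultimately show "M' \<in> ?R" unfolding RR_def by simp
      qed
      show "rowspan k ` ?R \<subseteq> ?L"
      proof
        fix Y assume "Y \<in> rowspan k ` ?R"
        then obtain M' where M': "M' \<in> ?R" "Y = rowspan k M'" by blast
        have R': "is_rref k n M'" using M'(1) unfolding RR_def by simp
        have "Y \<in> grassmannian n k" using grass_rowspan[OF R'] M'(2) by simp
        moreover have "ext_less q enc n k Y X"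
          using E.ext_less_iff RE_rref[OF R'] M' REX by simp
        ultimately show "Y \<in> ?L" by simp
      qed
    qed
    then show ?thesis unfolding I_EXT_def by (rule bij_betw_same_card)
  qed
  have "int (I_EXT q enc n k X) = i" using IE rk by simp
  with XG ext show ?thesis by (intro bexI[of _ X] conjI)
qed


end
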